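(* Let $(X_n)$ be generated by the $\lambda$-SAGA algorithm (defined in the context) with fixed $\lambda\in[0,1]$ and a positive deterministic step sequence $(\gamma_n)$ decreasing to $0$ with $\sum\gamma_n=+\infty$ and $\sum\gamma_n^2<+\infty$. Assume (A1) $f$ is continuously differentiable with a unique $x^*$ such that $\nabla f(x^* )=0$; (A3) there is $L>0$ with $\tau^2(x)\le L\|x-x^*\|^2$ for all $x$; (A5) there is $\mu>0$ with $\langle x-x^*,\nabla f(x)\rangle\ge\mu\|x-x^*\|^2$ for all $x$. Then almost surely $$\sum_{n\ge1}\gamma_nV_n<\infty,\qquad\sum_{n\ge1}\gamma_nA_n<\infty,\qquad\sum_{n\ge1}\gamma_n\tau^2(X_n)<\infty,$$ and moreover $$\sum_{n\ge1}\gamma_n\mathbb E[V_n]<\infty,\qquad\sum_{n\ge1}\gamma_n\mathbb E[A_n]<\infty,\qquad\sum_{n\ge1}\gamma_n\mathbb E[\tau^2(X_n)]<\infty.$$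
   Context: Let $N,d\ge1$ be integers, $f_1,\dots,f_N:\mathbb R^d\to\mathbb R$ differentiable, and $f=\frac1N\sum_{k=1}^N f_k$. The $\lambda$-SAGA algorithm with parameter $\lambda\in[0,1]$ and positive deterministic steps $(\gamma_n)_{n\ge1}$: let $X_0,X_1$ be square-integrable random vectors in $\mathbb R^d$ and $(U_n)_{n\ge2}$ i.i.d. uniform on $\{1,\dots,N\}$, independent of $(X_0,X_1)$. Set $g_{1,k}=\nabla f_k(X_0)$ for $k=1,\dots,N$ and for $n\ge1$: $X_{n+1}=X_n-\gamma_n\Big(\nabla f_{U_{n+1}}(X_n)-\lambda\big(g_{n,U_{n+1}}-\frac1N\sum_{k=1}^N g_{n,k}\big)\Big)$, and $g_{n+1,k}=\nabla f_k(X_n)$ if $U_{n+1}=k$, $g_{n+1,k}=g_{n,k}$ otherwise. Define $\phi_{n,k}$ by $\phi_{1,k}=X_0$, $\phi_{n+1,k}=X_n$ if $U_{n+1}=k$ and $\phi_{n+1,k}=\phi_{n,k}$ otherwise (so $g_{n,k}=\nabla f_k(\phi_{n,k})$). Notation: $V_n=\|X_n-x^*\|^2$, $\tau^2(x)=\frac1N\sum_{k=1}^N\|\nabla f_k(x)-\nabla f_k(x^* )\|^2$, $A_n=\frac1N\sum_{k=1}^N\|\nabla f_k(\phi_{n,k})-\nabla f_k(x^* )\|^2$. *)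

theory Defs
  imports "HOL-Probability.Probability"
begin

text \<open>State of the lambda-SAGA recursion.  saga_state g N lam gam x0 x1 u m = (X_(m+1), phi_(m+1))
  where phi_n k is the point at which the stored gradient g_(n,k) was evaluated,
  g k is the gradient of f_k, u n is the index U_n and gam n is the step gamma_n.\<close>
fun saga_state :: "(nat \<Rightarrow> 'a::euclidean_space \<Rightarrow> 'a) \<Rightarrow> nat \<Rightarrow> real \<Rightarrow> (nat \<Rightarrow> real)
      \<Rightarrow> 'a \<Rightarrow> 'a \<Rightarrow> (nat \<Rightarrow> nat) \<Rightarrow> nat \<Rightarrow> 'a \<times> (nat \<Rightarrow> 'a)" where
  "saga_state g N lam gam x0 x1 u 0 = (x1, (\<lambda>k. x0))"
| "saga_state g N lam gam x0 x1 u (Suc n) =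
     (let (x, phi) = saga_state g N lam gam x0 x1 u n; j = u (n + 2) in
       (x - gam (n + 1) *\<^sub>R (g j x - lam *\<^sub>R (g j (phi j) - (1 / real N) *\<^sub>R (\<Sum>k=1..N. g k (phi k)))),
        phi(j := x)))"

definition saga_X :: "(nat \<Rightarrow> 'a::euclidean_space \<Rightarrow> 'a) \<Rightarrow> nat \<Rightarrow> real \<Rightarrow> (nat \<Rightarrow> real)
      \<Rightarrow> 'a \<Rightarrow> 'a \<Rightarrow> (nat \<Rightarrow> nat) \<Rightarrow> nat \<Rightarrow> 'a" where
  "saga_X g N lam gam x0 x1 u n = fst (saga_state g N lam gam x0 x1 u (n - 1))"

definition saga_phi :: "(nat \<Rightarrow> 'a::euclidean_space \<Rightarrow> 'a) \<Rightarrow> nat \<Rightarrow> real \<Rightarrow> (nat \<Rightarrow> real)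
      \<Rightarrow> 'a \<Rightarrow> 'a \<Rightarrow> (nat \<Rightarrow> nat) \<Rightarrow> nat \<Rightarrow> nat \<Rightarrow> 'a" where
  "saga_phi g N lam gam x0 x1 u n = snd (saga_state g N lam gam x0 x1 u (n - 1))"

definition tau2 :: "(nat \<Rightarrow> 'a::euclidean_space \<Rightarrow> 'a) \<Rightarrow> nat \<Rightarrow> 'a \<Rightarrow> 'a \<Rightarrow> real" where
  "tau2 g N xs x = (1 / real N) * (\<Sum>k=1..N. (norm (g k x - g k xs))\<^sup>2)"

definition saga_A :: "(nat \<Rightarrow> 'a::euclidean_space \<Rightarrow> 'a) \<Rightarrow> nat \<Rightarrow> 'a \<Rightarrow> (nat \<Rightarrow> 'a) \<Rightarrow> real" where
  "saga_A g N xs phi = (1 / real N) * (\<Sum>k=1..N. (norm (g k (phi k) - g k xs))\<^sup>2)"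

end

theory Submission
  imports Defs
begin



lemma deriv_meas:
  fixes F :: "'a::euclidean_space \<Rightarrow> real" and G :: "'a \<Rightarrow> 'a"
  assumes d: "\<And>x. (F has_derivative (\<lambda>h. G x \<bullet> h)) (at x)"
  shows "G \<in> borel_measurable borel"
proof -
  have cont: "continuous_on UNIV F"
    using d has_derivative_continuous continuous_at_imp_continuous_on by blast
  show ?thesis
  proof (subst borel_measurable_euclidean_space, intro ballI)
    fix i :: 'a assume i: "i \<in> Basis"
    define Q where "Q m x = (F (x + inverse (real (Suc m)) *\<^sub>R i) - F x) / inverse (real (Suc m))" for m x
    show "(\<lambda>x. G x \<bullet> i) \<in> borel_measurable borel"
    proof (rule borel_measurable_LIMSEQ_real[where u=Q])
      fix x
      have h1: "((\<lambda>t. x + t *\<^sub>R i) has_derivative (\<lambda>t. t *\<^sub>R i)) (at (0::real))"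
        by (auto intro!: derivative_eq_intros)
      have h2: "((\<lambda>t. F (x + t *\<^sub>R i)) has_derivative (\<lambda>t. G x \<bullet> (t *\<^sub>R i))) (at (0::real))"
        using has_derivative_compose[OF h1, of F "\<lambda>h. G x \<bullet> h"] d[of x] by simp
      have "((\<lambda>t. F (x + t *\<^sub>R i)) has_field_derivative (G x \<bullet> i)) (at (0::real))"
      proof -
        have e: "(\<lambda>t. G x \<bullet> (t *\<^sub>R i)) = (*) (G x \<bullet> i)" by (auto simp: fun_eq_iff)
        show ?thesis unfolding has_field_derivative_def using h2 by (simp only: e)
      qed
      then have lim: "((\<lambda>t. (F (x + t *\<^sub>R i) - F x) / t) \<longlongrightarrow> G x \<bullet> i) (at 0)"
        unfolding has_field_derivative_iff by simp
      have s: "(\<lambda>m. inverse (real (Suc m))) \<longlonglongrightarrow> 0"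
        by (rule LIMSEQ_inverse_real_of_nat)
      have "((\<lambda>t. (F (x + t *\<^sub>R i) - F x) / t) \<circ> (\<lambda>m. inverse (real (Suc m)))) \<longlonglongrightarrow> G x \<bullet> i"
        using lim s unfolding tendsto_at_iff_sequentially by auto
      then show "(\<lambda>m. Q m x) \<longlonglongrightarrow> G x \<bullet> i" by (simp add: Q_def o_def)
    next
      fix m
      have "continuous_on UNIV (Q m)" unfolding Q_def
        by (intro continuous_intros continuous_on_compose2[OF cont]) auto
      then show "Q m \<in> borel_measurable borel"
        using borel_measurable_continuous_onI by blast
    qed
  qed
qed



lemma three_sq:
  fixes u v w :: "'a::real_normed_vector"
  shows "(norm (u + v + w))\<^sup>2 \<le> 3 * (norm u)\<^sup>2 + 3 * (norm v)\<^sup>2 + 3 * (norm w)\<^sup>2"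
proof -
  have "norm (u + v + w) \<le> norm u + norm v + norm w"
    by (meson add_mono_thms_linordered_semiring(3) norm_triangle_ineq order_trans)
  then have "(norm (u + v + w))\<^sup>2 \<le> (norm u + norm v + norm w)\<^sup>2"
    by (simp add: power_mono)
  also have "\<dots> \<le> 3 * (norm u)\<^sup>2 + 3 * (norm v)\<^sup>2 + 3 * (norm w)\<^sup>2"
    by (smt (verit, best) sum_squares_ge_zero power2_diff power2_sum mult_2 zero_le_power2
          power2_eq_square)
  finally show ?thesis .
qed

lemma var_le:
  fixes b :: "nat \<Rightarrow> 'a::real_inner"
  assumes N: "N \<ge> 1" and m: "m = (1 / real N) *\<^sub>R (\<Sum>k=1..N. b k)"
  shows "(\<Sum>j=1..N. (norm (b j - m))\<^sup>2) \<le> (\<Sum>j=1..N. (norm (b j))\<^sup>2)"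
proof -
  have sb: "(\<Sum>k=1..N. b k) = real N *\<^sub>R m" using N by (simp add: m)
  have "(\<Sum>j=1..N. (norm (b j - m))\<^sup>2) = (\<Sum>j=1..N. (norm (b j))\<^sup>2 - 2 * (b j \<bullet> m) + (norm m)\<^sup>2)"
    by (intro sum.cong refl) (simp add: power2_norm_eq_inner inner_diff_left inner_diff_right inner_commute)
  also have "\<dots> = (\<Sum>j=1..N. (norm (b j))\<^sup>2) - 2 * ((\<Sum>k=1..N. b k) \<bullet> m) + real N * (norm m)\<^sup>2"
    by (simp add: sum.distrib sum_subtractf inner_sum_left sum_distrib_left)
  also have "\<dots> = (\<Sum>j=1..N. (norm (b j))\<^sup>2) - real N * (norm m)\<^sup>2"
    using sb by (simp add: power2_norm_eq_inner)
  also have "\<dots> \<le> (\<Sum>j=1..N. (norm (b j))\<^sup>2)" by simp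
  finally show ?thesis .
qed

lemma step_V:
  fixes g :: "nat \<Rightarrow> 'a::euclidean_space \<Rightarrow> 'a"
  assumes N: "N \<ge> 1" and lam: "0 \<le> lam" "lam \<le> 1" and gam: "\<gamma> \<ge> 0"
    and xs: "(\<Sum>k=1..N. g k xs) = 0"
    and A3: "tau2 g N xs x \<le> L * (norm (x - xs))\<^sup>2"
    and A5: "(x - xs) \<bullet> ((1 / real N) *\<^sub>R (\<Sum>k=1..N. g k x)) \<ge> \<mu> * (norm (x - xs))\<^sup>2"
  shows "(1 / real N) * (\<Sum>j=1..N. (norm (x - \<gamma> *\<^sub>R (g j x - lam *\<^sub>R (g j (phi j)
            - (1 / real N) *\<^sub>R (\<Sum>k=1..N. g k (phi k)))) - xs))\<^sup>2)
     \<le> (1 - 2 * \<mu> * \<gamma> + 3 * L * \<gamma>\<^sup>2) * (norm (x - xs))\<^sup>2 + 3 * \<gamma>\<^sup>2 * saga_A g N xs phi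
        + 3 * \<gamma>\<^sup>2 * ((1 / real N) * (\<Sum>k=1..N. (norm (g k xs))\<^sup>2))"
proof -
  define m where "m = (1 / real N) *\<^sub>R (\<Sum>k=1..N. g k (phi k))"
  define H where "H j = g j x - lam *\<^sub>R (g j (phi j) - m)" for j
  define d where "d = x - xs"
  have Npos: "real N > 0" using N by simp
  have e1: "(norm (x - \<gamma> *\<^sub>R H j - xs))\<^sup>2 = (norm d)\<^sup>2 - 2 * \<gamma> * (d \<bullet> H j) + \<gamma>\<^sup>2 * (norm (H j))\<^sup>2" for j
  proof -
    have "x - \<gamma> *\<^sub>R H j - xs = d - \<gamma> *\<^sub>R H j" by (simp add: d_def algebra_simps)
    then show ?thesis
      unfolding power2_norm_eq_inner
      by (simp add: inner_diff_left inner_diff_right inner_commute power2_eq_square algebra_simps)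
  qed
  have sm: "(\<Sum>k=1..N. g k (phi k)) = real N *\<^sub>R m" using N by (simp add: m_def)
  have z: "(\<Sum>j=1..N. g j (phi j) - m) = 0" using sm by (simp add: sum_subtractf sum_constant_scaleR)
  have "(\<Sum>j=1..N. H j) = (\<Sum>j=1..N. g j x) - lam *\<^sub>R (\<Sum>j=1..N. g j (phi j) - m)"
    by (simp add: H_def sum_subtractf scaleR_sum_right scaleR_diff_right)
  then have sumH: "(\<Sum>j=1..N. H j) = (\<Sum>j=1..N. g j x)"
    by (simp only: z scaleR_zero_right diff_zero)
  have dH: "(\<Sum>j=1..N. d \<bullet> H j) = d \<bullet> (\<Sum>j=1..N. g j x)"
    by (simp only: inner_sum_right[symmetric] sumH)
  have A5': "d \<bullet> (\<Sum>j=1..N. g j x) \<ge> real N * \<mu> * (norm d)\<^sup>2"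
  proof -
    have "d \<bullet> (\<Sum>j=1..N. g j x) = real N * (d \<bullet> ((1 / real N) *\<^sub>R (\<Sum>k=1..N. g k x)))"
      using Npos by simp
    then show ?thesis using A5 Npos unfolding d_def by (simp add: pos_le_divide_eq mult_ac)
  qed
  define b where "b j = g j (phi j) - g j xs" for j
  have mb: "m = (1 / real N) *\<^sub>R (\<Sum>k=1..N. b k)"
    using xs by (simp add: b_def sum_subtractf m_def)
  have e3: "(norm (H j))\<^sup>2 \<le> 3 * (norm (g j x - g j xs))\<^sup>2 + 3 * (norm (g j xs))\<^sup>2 + 3 * (norm (b j - m))\<^sup>2" for j
  proof -
    have "H j = (g j x - g j xs) + (1 - lam) *\<^sub>R g j xs + (- lam) *\<^sub>R (b j - m)"
      by (simp add: H_def b_def algebra_simps)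
    then have "(norm (H j))\<^sup>2 \<le> 3 * (norm (g j x - g j xs))\<^sup>2 + 3 * (norm ((1 - lam) *\<^sub>R g j xs))\<^sup>2 + 3 * (norm ((- lam) *\<^sub>R (b j - m)))\<^sup>2"
      using three_sq by metis
    moreover have "(norm ((1 - lam) *\<^sub>R g j xs))\<^sup>2 \<le> (norm (g j xs))\<^sup>2"
      using lam by (simp add: power_mult_distrib, intro mult_left_le_one_le) (auto simp: power_le_one)
    moreover have "(norm ((- lam) *\<^sub>R (b j - m)))\<^sup>2 \<le> (norm (b j - m))\<^sup>2"
      using lam by (simp add: power_mult_distrib, intro mult_left_le_one_le) (auto simp: power_le_one)
    ultimately show ?thesis by linarith
  qed
  have var: "(\<Sum>j=1..N. (norm (b j - m))\<^sup>2) \<le> (\<Sum>j=1..N. (norm (b j))\<^sup>2)"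
    by (rule var_le[OF N mb])
  have tA: "(\<Sum>j=1..N. (norm (g j x - g j xs))\<^sup>2) = real N * tau2 g N xs x"
    using Npos by (simp add: tau2_def)
  have aA: "(\<Sum>j=1..N. (norm (b j))\<^sup>2) = real N * saga_A g N xs phi"
    using Npos by (simp add: saga_A_def b_def)
  have sH: "(\<Sum>j=1..N. (norm (H j))\<^sup>2) \<le> 3 * (real N * tau2 g N xs x) + 3 * (\<Sum>k=1..N. (norm (g k xs))\<^sup>2)
        + 3 * (real N * saga_A g N xs phi)"
  proof -
    have "(\<Sum>j=1..N. (norm (H j))\<^sup>2) \<le> (\<Sum>j=1..N. 3 * (norm (g j x - g j xs))\<^sup>2 + 3 * (norm (g j xs))\<^sup>2 + 3 * (norm (b j - m))\<^sup>2)"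
      by (rule sum_mono) (rule e3)
    also have "\<dots> = 3 * (\<Sum>j=1..N. (norm (g j x - g j xs))\<^sup>2) + 3 * (\<Sum>j=1..N. (norm (g j xs))\<^sup>2) + 3 * (\<Sum>j=1..N. (norm (b j - m))\<^sup>2)"
      by (simp add: sum.distrib sum_distrib_left)
    finally show ?thesis using var tA aA by linarith
  qed
  have "(\<Sum>j=1..N. (norm (x - \<gamma> *\<^sub>R H j - xs))\<^sup>2)
      = real N * (norm d)\<^sup>2 - 2 * \<gamma> * (d \<bullet> (\<Sum>j=1..N. g j x)) + \<gamma>\<^sup>2 * (\<Sum>j=1..N. (norm (H j))\<^sup>2)"
    using dH by (simp add: e1 sum.distrib sum_subtractf sum_distrib_left[symmetric])
  also have "\<dots> \<le> real N * (norm d)\<^sup>2 - 2 * \<gamma> * (real N * \<mu> * (norm d)\<^sup>2)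
      + \<gamma>\<^sup>2 * (3 * (real N * (L * (norm d)\<^sup>2)) + 3 * (\<Sum>k=1..N. (norm (g k xs))\<^sup>2)
        + 3 * (real N * saga_A g N xs phi))"
  proof -
    have "2 * \<gamma> * (real N * \<mu> * (norm d)\<^sup>2) \<le> 2 * \<gamma> * (d \<bullet> (\<Sum>j=1..N. g j x))"
      using A5' gam by (simp add: mult_left_mono)
    moreover have "\<gamma>\<^sup>2 * (\<Sum>j=1..N. (norm (H j))\<^sup>2) \<le> \<gamma>\<^sup>2 * (3 * (real N * (L * (norm d)\<^sup>2)) + 3 * (\<Sum>k=1..N. (norm (g k xs))\<^sup>2)
        + 3 * (real N * saga_A g N xs phi))"
    proof (rule mult_left_mono)
      have "real N * tau2 g N xs x \<le> real N * (L * (norm d)\<^sup>2)"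
        using A3 Npos unfolding d_def by (simp add: mult_left_mono)
      then show "(\<Sum>j=1..N. (norm (H j))\<^sup>2) \<le> 3 * (real N * (L * (norm d)\<^sup>2)) + 3 * (\<Sum>k=1..N. (norm (g k xs))\<^sup>2)
        + 3 * (real N * saga_A g N xs phi)" using sH by linarith
    qed simp
    ultimately show ?thesis by linarith
  qed
  also have "\<dots> = real N * ((1 - 2 * \<mu> * \<gamma> + 3 * L * \<gamma>\<^sup>2) * (norm (x - xs))\<^sup>2 + 3 * \<gamma>\<^sup>2 * saga_A g N xs phi
        + 3 * \<gamma>\<^sup>2 * ((1 / real N) * (\<Sum>k=1..N. (norm (g k xs))\<^sup>2)))"
    using Npos by (simp add: d_def algebra_simps)
  finally have "(\<Sum>j=1..N. (norm (x - \<gamma> *\<^sub>R H j - xs))\<^sup>2) \<le> real N * ((1 - 2 * \<mu> * \<gamma> + 3 * L * \<gamma>\<^sup>2) * (norm (x - xs))\<^sup>2 + 3 * \<gamma>\<^sup>2 * saga_A g N xs phi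
        + 3 * \<gamma>\<^sup>2 * ((1 / real N) * (\<Sum>k=1..N. (norm (g k xs))\<^sup>2)))" .
  then show ?thesis using Npos unfolding H_def m_def
    by (simp add: divide_simps mult.commute)
qed

lemma step_A:
  fixes g :: "nat \<Rightarrow> 'a::euclidean_space \<Rightarrow> 'a"
  assumes N: "N \<ge> 1"
  shows "(1 / real N) * (\<Sum>j=1..N. saga_A g N xs (phi(j := x)))
       = (1 - 1 / real N) * saga_A g N xs phi + (1 / real N) * tau2 g N xs x"
proof -
  define c where "c k = (norm (g k (phi k) - g k xs))\<^sup>2" for k
  define t where "t k = (norm (g k x - g k xs))\<^sup>2" for k
  have Npos: "real N > 0" using N by simp
  have one: "(\<Sum>k=1..N. (norm (g k ((phi(j := x)) k) - g k xs))\<^sup>2) = (\<Sum>k=1..N. c k) - c j + t j"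
    if j: "j \<in> {1..N}" for j
  proof -
    have "(\<Sum>k=1..N. (norm (g k ((phi(j := x)) k) - g k xs))\<^sup>2) = (\<Sum>k=1..N. (if k = j then t k else c k))"
      by (intro sum.cong) (auto simp: c_def t_def)
    also have "\<dots> = (\<Sum>k=1..N. c k + (if k = j then t j - c j else 0))"
      by (intro sum.cong) auto
    also have "\<dots> = (\<Sum>k=1..N. c k) - c j + t j"
      using j by (simp add: sum.distrib)
    finally show ?thesis .
  qed
  have "(\<Sum>j=1..N. saga_A g N xs (phi(j := x))) = (\<Sum>j=1..N. (1 / real N) * ((\<Sum>k=1..N. c k) - c j + t j))"
    by (intro sum.cong refl) (use one in \<open>simp add: saga_A_def del: fun_upd_apply\<close>)
  also have "\<dots> = (1 / real N) * (\<Sum>j=1..N. ((\<Sum>k=1..N. c k) - c j + t j))"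
    by (simp only: sum_distrib_left)
  also have "\<dots> = (1 / real N) * (real N * (\<Sum>k=1..N. c k) - (\<Sum>k=1..N. c k) + (\<Sum>k=1..N. t k))"
    by (simp add: sum.distrib sum_subtractf)
  finally show ?thesis using Npos
    by (simp add: saga_A_def tau2_def c_def t_def field_simps)
qed




lemma det_rec:
  fixes \<gamma> :: "nat \<Rightarrow> real"
  assumes gpos: "\<And>n. \<gamma> n \<ge> 0" and gdec: "\<And>n. \<gamma> (Suc n) \<le> \<gamma> n" and glim: "\<gamma> \<longlonglongrightarrow> 0"
    and gsq: "summable (\<lambda>n. (\<gamma> n)\<^sup>2)" and mu: "\<mu> > 0" and L: "L > 0" and N: "N \<ge> 1" and sig: "\<sigma> \<ge> 0"
  shows "\<exists>K. \<forall>e a. (\<forall>n. e n \<ge> 0 \<and> a n \<ge> 0)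
     \<longrightarrow> (\<forall>n. e (Suc n) \<le> (1 - 2 * \<mu> * \<gamma> n + 3 * L * (\<gamma> n)\<^sup>2) * e n + 3 * (\<gamma> n)\<^sup>2 * a n + 3 * (\<gamma> n)\<^sup>2 * \<sigma>)
     \<longrightarrow> (\<forall>n. a (Suc n) \<le> (1 - 1 / real N) * a n + (L / real N) * e n)
     \<longrightarrow> (\<forall>M. (\<Sum>n<M. \<gamma> n * e n) \<le> K * (e 0 + a 0 + 1) \<and> (\<Sum>n<M. \<gamma> n * a n) \<le> K * (e 0 + a 0 + 1))"
proof -
  define g0 where "g0 = \<gamma> 0"
  have gle: "\<gamma> n \<le> g0" for n unfolding g0_def
  proof (induction n)
    case (Suc n) show ?case using gdec[of n] Suc by linarith
  qed simp
  have g0pos: "g0 \<ge> 0" using gpos g0_def by simp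
  have Npos: "real N \<ge> 1" using N by simp
  define C where "C = 1 + 3 * L * g0\<^sup>2 + 3 * g0\<^sup>2 + 3 * \<sigma> * g0\<^sup>2 + L / real N"
  have C1: "C \<ge> 1" using L sig Npos unfolding C_def by (simp add: add_nonneg_nonneg)
  obtain n0 where n0: "\<And>n. n \<ge> n0 \<Longrightarrow> \<gamma> n \<le> \<mu> / (6 * L)"
  proof -
    have pos: "\<mu> / (6 * L) > 0" using mu L by simp
    obtain n0 where "\<forall>n\<ge>n0. norm (\<gamma> n - 0) < \<mu> / (6 * L)"
      using LIMSEQ_D[OF glim pos] by blast
    then show ?thesis by (intro that) auto
  qed
  define P where "P = (2 * C + 1) ^ n0"
  define c where "c = \<mu> * real N / L"
  have cpos: "c > 0" using mu L N unfolding c_def by simp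
  define S2 where "S2 = (\<Sum>n. (\<gamma> n)\<^sup>2)"
  define K1 where "K1 = real n0 * g0 * P + (2 / \<mu>) * ((1 + c * g0) * P + 3 * \<sigma> * S2)"
  define K where "K = K1 + real N * g0 + L * K1"
  show ?thesis
  proof (intro exI[of _ K] allI impI)
    fix e a :: "nat \<Rightarrow> real" and M :: nat
    assume nn: "\<forall>n. e n \<ge> 0 \<and> a n \<ge> 0"
      and re: "\<forall>n. e (Suc n) \<le> (1 - 2 * \<mu> * \<gamma> n + 3 * L * (\<gamma> n)\<^sup>2) * e n + 3 * (\<gamma> n)\<^sup>2 * a n + 3 * (\<gamma> n)\<^sup>2 * \<sigma>"
      and ra: "\<forall>n. a (Suc n) \<le> (1 - 1 / real N) * a n + (L / real N) * e n"
    define s where "s n = e n + a n + 1" for n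
    have e0: "e n \<ge> 0" and a0: "a n \<ge> 0" for n using nn by auto
    have s1: "s 0 \<ge> 1" using e0 a0 unfolding s_def by simp
    have sstep: "s (Suc n) \<le> (2 * C + 1) * s n" for n
    proof -
      have g2: "(\<gamma> n)\<^sup>2 \<le> g0\<^sup>2" using gle gpos by (simp add: power_mono)
      have c1: "1 - 2 * \<mu> * \<gamma> n + 3 * L * (\<gamma> n)\<^sup>2 \<le> C"
      proof -
        have "2 * \<mu> * \<gamma> n \<ge> 0" using mu gpos by simp
        moreover have "3 * L * (\<gamma> n)\<^sup>2 \<le> 3 * L * g0\<^sup>2" using g2 L by simp
        moreover have "0 \<le> 3 * g0\<^sup>2" "0 \<le> 3 * \<sigma> * g0\<^sup>2" "0 \<le> L / real N" using sig L by auto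
        ultimately show ?thesis unfolding C_def by linarith
      qed
      have "e (Suc n) \<le> C * e n + C * a n + C"
      proof -
        have "(1 - 2 * \<mu> * \<gamma> n + 3 * L * (\<gamma> n)\<^sup>2) * e n \<le> C * e n"
          using c1 e0 by (simp add: mult_right_mono)
        moreover have "3 * (\<gamma> n)\<^sup>2 * a n \<le> C * a n"
        proof -
          have "0 \<le> 3 * L * g0\<^sup>2" "0 \<le> 3 * \<sigma> * g0\<^sup>2" "0 \<le> L / real N" using sig L by auto
          then have "3 * (\<gamma> n)\<^sup>2 \<le> C" using g2 unfolding C_def by linarith
          then show ?thesis using a0 by (simp add: mult_right_mono)
        qed
        moreover have "3 * (\<gamma> n)\<^sup>2 * \<sigma> \<le> C"
        proof -
          have "\<sigma> * (\<gamma> n)\<^sup>2 \<le> \<sigma> * g0\<^sup>2" using g2 sig by (rule mult_left_mono)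
          then have "3 * (\<gamma> n)\<^sup>2 * \<sigma> \<le> 3 * \<sigma> * g0\<^sup>2" by (simp add: mult_ac)
          moreover have "0 \<le> 3 * L * g0\<^sup>2" "0 \<le> 3 * g0\<^sup>2" "0 \<le> L / real N" using sig L by auto
          ultimately show ?thesis unfolding C_def by linarith
        qed
        ultimately show ?thesis using re[rule_format, of n] by linarith
      qed
      moreover have "a (Suc n) \<le> a n + C * e n"
      proof -
        have "(1 - 1 / real N) * a n \<le> a n" using a0 Npos by (simp add: mult_left_le_one_le)
        moreover have "(L / real N) * e n \<le> C * e n"
        proof (rule mult_right_mono)
          have "0 \<le> 3 * L * g0\<^sup>2" "0 \<le> 3 * g0\<^sup>2" "0 \<le> 3 * \<sigma> * g0\<^sup>2" using sig L by auto
          then show "L / real N \<le> C" unfolding C_def by linarith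
        qed (use e0 in auto)
        ultimately show ?thesis using ra[rule_format, of n] by linarith
      qed
      moreover have "(2 * C + 1) * s n = 2 * (C * e n) + 2 * (C * a n) + 2 * C + e n + a n + 1"
        by (simp add: s_def algebra_simps)
      moreover have "C * a n \<ge> 0" "C * e n \<ge> 0" using C1 a0 e0 by auto
      ultimately show ?thesis unfolding s_def using e0[of n] a0[of n] C1 by linarith
    qed
    have sbound: "s n \<le> (2 * C + 1) ^ n * s 0" for n
    proof (induction n)
      case (Suc n)
      have "s (Suc n) \<le> (2 * C + 1) * s n" by (rule sstep)
      also have "\<dots> \<le> (2 * C + 1) * ((2 * C + 1) ^ n * s 0)"
        using Suc C1 by (simp add: mult_left_mono)
      finally show ?case by simp
    qed simp
    have sP: "s n \<le> P * s 0" if "n \<le> n0" for n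
    proof -
      have "(2 * C + 1) ^ n \<le> P" unfolding P_def using that C1 by (simp add: power_increasing)
      then have "(2 * C + 1) ^ n * s 0 \<le> P * s 0" using s1 by (simp add: mult_right_mono)
      then show ?thesis using sbound[of n] by linarith
    qed
    have P1: "P \<ge> 1" unfolding P_def using C1 by simp
    define W where "W n = e n + c * \<gamma> n * a n" for n
    have Wstep: "W (Suc n) \<le> W n - (\<mu> / 2) * \<gamma> n * e n + 3 * \<sigma> * (\<gamma> n)\<^sup>2" if "n \<ge> n0" for n
    proof -
      let ?g = "\<gamma> n"
      have gs: "?g \<le> \<mu> / (6 * L)" using n0 that by simp
      have h1: "c * \<gamma> (Suc n) * a (Suc n) \<le> c * ?g * a (Suc n)"
        using cpos a0 gdec by (simp add: mult_right_mono)
      have h2: "c * ?g * a (Suc n) \<le> c * ?g * ((1 - 1 / real N) * a n + (L / real N) * e n)"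
        using ra cpos gpos by (simp add: mult_left_mono)
      have h3: "c * ?g * ((L / real N) * e n) = \<mu> * ?g * e n"
        unfolding c_def using L Npos by (simp add: field_simps)
      have h4: "3 * L * ?g\<^sup>2 * e n \<le> (\<mu> / 2) * ?g * e n"
      proof -
        have "3 * L * ?g \<le> \<mu> / 2" using gs L by (simp add: field_simps)
        then have "3 * L * ?g * (?g * e n) \<le> (\<mu> / 2) * (?g * e n)"
          by (rule mult_right_mono) (use gpos e0 in simp)
        then show ?thesis by (simp add: power2_eq_square mult_ac)
      qed
      have h5: "3 * ?g\<^sup>2 * a n \<le> c * ?g * (1 / real N) * a n"
      proof -
        have "3 * ?g \<le> c / real N" unfolding c_def using gs L mu Npos by (simp add: field_simps)
        then have "3 * ?g * (?g * a n) \<le> c / real N * (?g * a n)"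
          by (rule mult_right_mono) (use gpos a0 in simp)
        then show ?thesis by (simp add: power2_eq_square mult_ac)
      qed
      have "W (Suc n) \<le> (1 - 2 * \<mu> * ?g + 3 * L * ?g\<^sup>2) * e n + 3 * ?g\<^sup>2 * a n + 3 * ?g\<^sup>2 * \<sigma>
           + c * ?g * ((1 - 1 / real N) * a n + (L / real N) * e n)"
        unfolding W_def using re[rule_format, of n] h1 h2 by linarith
      also have "\<dots> = e n - 2 * \<mu> * ?g * e n + 3 * L * ?g\<^sup>2 * e n + 3 * ?g\<^sup>2 * a n + 3 * ?g\<^sup>2 * \<sigma>
           + c * ?g * a n - c * ?g * (1 / real N) * a n + c * ?g * ((L / real N) * e n)"
        by (simp add: algebra_simps)
      also have "\<dots> \<le> W n - (\<mu> / 2) * ?g * e n + 3 * \<sigma> * ?g\<^sup>2"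
        unfolding W_def using h3 h4 h5 by (simp add: algebra_simps)
      finally show ?thesis .
    qed
    have tele: "(\<mu> / 2) * (\<Sum>n\<in>{n0..<n0+k}. \<gamma> n * e n) + W (n0 + k) \<le> W n0 + 3 * \<sigma> * (\<Sum>n\<in>{n0..<n0+k}. (\<gamma> n)\<^sup>2)" for k
    proof (induction k)
      case (Suc k)
      have "W (Suc (n0 + k)) \<le> W (n0 + k) - (\<mu> / 2) * \<gamma> (n0 + k) * e (n0 + k) + 3 * \<sigma> * (\<gamma> (n0 + k))\<^sup>2"
        by (rule Wstep) simp
      then show ?case using Suc by (simp add: algebra_simps)
    qed simp
    have Wnn: "W n \<ge> 0" for n unfolding W_def using e0 a0 cpos gpos by simp
    have S2b: "(\<Sum>n\<in>{n0..<n0+k}. (\<gamma> n)\<^sup>2) \<le> S2" for k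
      unfolding S2_def by (rule sum_le_suminf[OF gsq]) auto
    have Wn0: "W n0 \<le> (1 + c * g0) * P * s 0"
    proof -
      have "e n0 \<le> s n0" "a n0 \<le> s n0" unfolding s_def using e0 a0 by auto
      then have "\<gamma> n0 * a n0 \<le> g0 * s n0" using gle[of n0] gpos[of n0] a0[of n0]
        by (intro mult_mono) auto
      then have "c * \<gamma> n0 * a n0 \<le> c * g0 * s n0" using cpos
        by (simp add: mult.assoc mult_left_mono)
      then have "W n0 \<le> (1 + c * g0) * s n0" unfolding W_def using \<open>e n0 \<le> s n0\<close>
        by (simp add: algebra_simps)
      also have "\<dots> \<le> (1 + c * g0) * (P * s 0)"
        using sP[of n0] cpos g0pos by (simp add: mult_left_mono)
      finally show ?thesis by simp
    qed
    have tail: "(\<Sum>n\<in>{n0..<n0+k}. \<gamma> n * e n) \<le> (2 / \<mu>) * ((1 + c * g0) * P + 3 * \<sigma> * S2) * s 0" for k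
    proof -
      have "(\<mu> / 2) * (\<Sum>n\<in>{n0..<n0+k}. \<gamma> n * e n) \<le> W n0 + 3 * \<sigma> * S2"
      proof -
        have "3 * \<sigma> * (\<Sum>n\<in>{n0..<n0+k}. (\<gamma> n)\<^sup>2) \<le> 3 * \<sigma> * S2"
          using S2b[of k] sig by (simp add: mult_left_mono)
        then show ?thesis using tele[of k] Wnn[of "n0+k"] by linarith
      qed
      also have "\<dots> \<le> ((1 + c * g0) * P + 3 * \<sigma> * S2) * s 0"
      proof -
        have "S2 \<ge> 0" unfolding S2_def by (rule suminf_nonneg[OF gsq]) simp
        then have "3 * \<sigma> * S2 * 1 \<le> 3 * \<sigma> * S2 * s 0"
          by (intro mult_left_mono) (use s1 sig in auto)
        then show ?thesis using Wn0 by (simp add: algebra_simps)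
      qed
      finally show ?thesis using mu by (simp add: field_simps)
    qed
    have head: "(\<Sum>n<n0. \<gamma> n * e n) \<le> real n0 * g0 * P * s 0"
    proof -
      have "(\<Sum>n<n0. \<gamma> n * e n) \<le> (\<Sum>n<n0. g0 * (P * s 0))"
      proof (rule sum_mono)
        fix n assume "n \<in> {..<n0}"
        then have "e n \<le> P * s 0" using sP[of n] a0[of n] unfolding s_def by simp
        then show "\<gamma> n * e n \<le> g0 * (P * s 0)" using gle[of n] gpos[of n] e0[of n] by (intro mult_mono) auto
      qed
      then show ?thesis by (simp add: mult_ac)
    qed
    have Ee: "(\<Sum>n<M. \<gamma> n * e n) \<le> K1 * s 0" for M
    proof -
      have nng: "\<And>n. \<gamma> n * e n \<ge> 0" using gpos e0 by simp
      have "(\<Sum>n<M. \<gamma> n * e n) \<le> (\<Sum>n<n0 + M. \<gamma> n * e n)"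
        by (rule sum_mono2) (auto simp: nng)
      also have "\<dots> = (\<Sum>n<n0. \<gamma> n * e n) + (\<Sum>n\<in>{n0..<n0+M}. \<gamma> n * e n)"
        by (simp add: sum.atLeastLessThan_concat[symmetric] lessThan_atLeast0)
      also have "\<dots> \<le> K1 * s 0" using head tail[of M] unfolding K1_def by (simp add: algebra_simps)
      finally show ?thesis .
    qed
    have K1pos: "K1 \<ge> 0"
    proof -
      have "S2 \<ge> 0" unfolding S2_def by (rule suminf_nonneg[OF gsq]) simp
      then show ?thesis unfolding K1_def using g0pos P1 cpos mu sig by simp
    qed
    have Ea: "(\<Sum>n<M. \<gamma> n * a n) \<le> real N * g0 * s 0 + L * (K1 * s 0)" for M
    proof -
      define B where "B M = (\<Sum>n<M. \<gamma> n * a n)" for M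
      define E where "E M = (\<Sum>n<M. \<gamma> n * e n)" for M
      have bstep: "\<gamma> (Suc n) * a (Suc n) \<le> (1 - 1 / real N) * (\<gamma> n * a n) + (L / real N) * (\<gamma> n * e n)" for n
      proof -
        have "\<gamma> (Suc n) * a (Suc n) \<le> \<gamma> n * a (Suc n)" using gdec a0 by (simp add: mult_right_mono)
        also have "\<dots> \<le> \<gamma> n * ((1 - 1 / real N) * a n + (L / real N) * e n)"
          using ra gpos by (simp add: mult_left_mono)
        finally show ?thesis by (simp add: algebra_simps)
      qed
      have "B (Suc M) = \<gamma> 0 * a 0 + (\<Sum>n<M. \<gamma> (Suc n) * a (Suc n))"
        unfolding B_def by (rule sum.lessThan_Suc_shift)
      also have "\<dots> \<le> \<gamma> 0 * a 0 + (\<Sum>n<M. (1 - 1 / real N) * (\<gamma> n * a n) + (L / real N) * (\<gamma> n * e n))"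
        by (intro add_left_mono sum_mono bstep)
      also have "\<dots> = \<gamma> 0 * a 0 + (1 - 1 / real N) * B M + (L / real N) * E M"
        unfolding B_def E_def by (simp add: sum.distrib sum_distrib_left)
      finally have "B (Suc M) \<le> \<gamma> 0 * a 0 + (1 - 1 / real N) * B M + (L / real N) * E M" .
      moreover have "B M \<le> B (Suc M)" unfolding B_def using gpos a0 by simp
      moreover have "(1 - 1 / real N) * B M = B M - B M / real N" by (simp add: algebra_simps)
      moreover have "(L / real N) * E M = (L * E M) / real N" by simp
      ultimately have "B M / real N \<le> \<gamma> 0 * a 0 + (L * E M) / real N"
        by linarith
      also have "\<dots> = (real N * (\<gamma> 0 * a 0) + L * E M) / real N" using Npos by (simp add: field_simps)
      finally have "B M \<le> real N * (\<gamma> 0 * a 0) + L * E M"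
        using Npos by (simp add: divide_le_cancel)
      moreover have "\<gamma> 0 * a 0 \<le> g0 * s 0" unfolding g0_def s_def using gpos e0 by (simp add: mult_left_mono)
      moreover have "E M \<le> K1 * s 0" unfolding E_def by (rule Ee)
      ultimately have "B M \<le> real N * (g0 * s 0) + L * (K1 * s 0)"
      proof -
        assume h: "B M \<le> real N * (\<gamma> 0 * a 0) + L * E M" "\<gamma> 0 * a 0 \<le> g0 * s 0" "E M \<le> K1 * s 0"
        have "real N * (\<gamma> 0 * a 0) \<le> real N * (g0 * s 0)" using h(2) by (rule mult_left_mono) simp
        moreover have "L * E M \<le> L * (K1 * s 0)" using h(3) L by (intro mult_left_mono) auto
        ultimately show ?thesis using h(1) by linarith
      qed
      then show ?thesis unfolding B_def by (simp add: mult.assoc)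
    qed
    have s0: "s 0 = e 0 + a 0 + 1" by (simp add: s_def)
    show "(\<Sum>n<M. \<gamma> n * e n) \<le> K * (e 0 + a 0 + 1) \<and> (\<Sum>n<M. \<gamma> n * a n) \<le> K * (e 0 + a 0 + 1)"
    proof
      have "K1 * s 0 \<le> K * s 0" unfolding K_def using s1 K1pos g0pos L Npos
        by (intro mult_right_mono) auto
      then show "(\<Sum>n<M. \<gamma> n * e n) \<le> K * (e 0 + a 0 + 1)" using Ee[of M] s0 by simp
      have "real N * g0 * s 0 + L * (K1 * s 0) \<le> K * s 0" unfolding K_def using s1 K1pos
        by (simp add: algebra_simps)
      then show "(\<Sum>n<M. \<gamma> n * a n) \<le> K * (e 0 + a 0 + 1)" using Ea[of M] s0 by simp
    qed
  qed
qed



definition stp :: "(nat \<Rightarrow> 'a::euclidean_space \<Rightarrow> 'a) \<Rightarrow> nat \<Rightarrow> real \<Rightarrow> (nat \<Rightarrow> real) \<Rightarrow> nat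
    \<Rightarrow> 'a \<times> (nat \<Rightarrow> 'a) \<Rightarrow> nat \<Rightarrow> 'a \<times> (nat \<Rightarrow> 'a)" where
  "stp g N lam gam n p j = (fst p - gam (n + 1) *\<^sub>R (g j (fst p) - lam *\<^sub>R (g j (snd p j)
      - (1 / real N) *\<^sub>R (\<Sum>k=1..N. g k (snd p k)))), (snd p)(j := fst p))"

lemma saga_state_Suc':
  "saga_state g N lam gam x0 x1 u (Suc n) = stp g N lam gam n (saga_state g N lam gam x0 x1 u n) (u (n + 2))"
  by (simp add: stp_def Let_def case_prod_beta)

lemma saga_state_cong:
  "(\<And>m. m \<in> {2..n+1} \<Longrightarrow> u m = w m) \<Longrightarrow> saga_state g N lam gam x0 x1 u n = saga_state g N lam gam x0 x1 w n"
proof (induction n)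
  case 0 then show ?case by simp
next
  case (Suc n)
  have "saga_state g N lam gam x0 x1 u n = saga_state g N lam gam x0 x1 w n"
    using Suc.prems by (intro Suc.IH) auto
  moreover have "u (n + 2) = w (n + 2)" using Suc.prems by auto
  ultimately show ?case by (simp only: saga_state_Suc')
qed

definition SS :: "nat \<Rightarrow> nat \<Rightarrow> (nat \<Rightarrow> nat) set" where
  "SS N n = Pi\<^sub>E {2..n+1} (\<lambda>_. {1..N})"

lemma SS_finite: "finite (SS N n)"
  unfolding SS_def by (simp add: finite_PiE)

lemma SS_card: "card (SS N n) = N ^ n"
  unfolding SS_def by (simp add: card_PiE)

lemma SS_0: "SS N 0 = {\<lambda>_. undefined}"
  unfolding SS_def by simp

lemma SS_Suc_sum:
  "(\<Sum>v\<in>SS N (Suc n). F v) = (\<Sum>v\<in>SS N n. \<Sum>j\<in>{1..N}. F (v(n+2 := j)))"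
proof -
  have I: "{2..Suc n + 1} = insert (n+2) {2..n+1}" by auto
  have nI: "n + 2 \<notin> {2..n+1}" by simp
  have "(\<Sum>v\<in>SS N (Suc n). F v) = (\<Sum>v\<in>(\<lambda>(y, g). g(n+2 := y)) ` ({1..N} \<times> SS N n). F v)"
    unfolding SS_def I PiE_insert_eq by simp
  also have "\<dots> = (\<Sum>p\<in>{1..N} \<times> SS N n. F ((\<lambda>(y, g). g(n+2 := y)) p))"
    by (rule sum.reindex_cong[OF _ refl refl]) (use inj_combinator[OF nI, of "\<lambda>_. {1..N}"] in \<open>simp add: SS_def\<close>)
  also have "\<dots> = (\<Sum>j\<in>{1..N}. \<Sum>v\<in>SS N n. F (v(n+2 := j)))"
    by (simp add: sum.cartesian_product case_prod_unfold)
  also have "\<dots> = (\<Sum>v\<in>SS N n. \<Sum>j\<in>{1..N}. F (v(n+2 := j)))"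
    by (rule sum.swap)
  finally show ?thesis .
qed

definition avg :: "(nat \<Rightarrow> 'a::euclidean_space \<Rightarrow> 'a) \<Rightarrow> nat \<Rightarrow> real \<Rightarrow> (nat \<Rightarrow> real)
    \<Rightarrow> ('a \<times> (nat \<Rightarrow> 'a) \<Rightarrow> real) \<Rightarrow> 'a \<Rightarrow> 'a \<Rightarrow> nat \<Rightarrow> real" where
  "avg g N lam gam Q x0 x1 n = (1 / real N ^ n) * (\<Sum>v\<in>SS N n. Q (saga_state g N lam gam x0 x1 v n))"

lemma avg_Suc:
  assumes N: "N \<ge> 1"
  shows "avg g N lam gam Q x0 x1 (Suc n) = (1 / real N ^ n) * (\<Sum>v\<in>SS N n.
     (1 / real N) * (\<Sum>j\<in>{1..N}. Q (stp g N lam gam n (saga_state g N lam gam x0 x1 v n) j)))"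
proof -
  have st: "saga_state g N lam gam x0 x1 (v(n+2 := j)) (Suc n) = stp g N lam gam n (saga_state g N lam gam x0 x1 v n) j" for v j
  proof -
    have "saga_state g N lam gam x0 x1 (v(n+2 := j)) n = saga_state g N lam gam x0 x1 v n"
      by (rule saga_state_cong) auto
    then show ?thesis by (simp only: saga_state_Suc') simp
  qed
  have "avg g N lam gam Q x0 x1 (Suc n) = (1 / real N ^ Suc n) * (\<Sum>v\<in>SS N n. \<Sum>j\<in>{1..N}. Q (stp g N lam gam n (saga_state g N lam gam x0 x1 v n) j))"
    unfolding avg_def SS_Suc_sum st ..
  also have "\<dots> = (1 / real N ^ n) * (\<Sum>v\<in>SS N n. (1 / real N) * (\<Sum>j\<in>{1..N}. Q (stp g N lam gam n (saga_state g N lam gam x0 x1 v n) j)))"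
    unfolding sum_distrib_left[symmetric] by (simp add: power_Suc mult.commute)
  finally show ?thesis .
qed

lemma avg_mono_lin:
  assumes "\<And>v. v \<in> SS N n \<Longrightarrow> P v \<le> c1 * Q1 v + c2 * Q2 v + c3"
  shows "(1 / real N ^ n) * (\<Sum>v\<in>SS N n. P v) \<le> c1 * ((1 / real N ^ n) * (\<Sum>v\<in>SS N n. Q1 v))
      + c2 * ((1 / real N ^ n) * (\<Sum>v\<in>SS N n. Q2 v)) + c3 * ((1 / real N ^ n) * real (card (SS N n)))"
proof -
  have "(\<Sum>v\<in>SS N n. P v) \<le> (\<Sum>v\<in>SS N n. c1 * Q1 v + c2 * Q2 v + c3)"
    by (rule sum_mono) (rule assms)
  also have "\<dots> = c1 * (\<Sum>v\<in>SS N n. Q1 v) + c2 * (\<Sum>v\<in>SS N n. Q2 v) + c3 * real (card (SS N n))"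
    by (simp add: sum.distrib sum_distrib_left)
  finally have "(\<Sum>v\<in>SS N n. P v) \<le> c1 * (\<Sum>v\<in>SS N n. Q1 v) + c2 * (\<Sum>v\<in>SS N n. Q2 v) + c3 * real (card (SS N n))" .
  then have "(1 / real N ^ n) * (\<Sum>v\<in>SS N n. P v) \<le> (1 / real N ^ n) * (c1 * (\<Sum>v\<in>SS N n. Q1 v) + c2 * (\<Sum>v\<in>SS N n. Q2 v) + c3 * real (card (SS N n)))"
    by (rule mult_left_mono) simp
  then show ?thesis by (simp add: algebra_simps)
qed




lemma avg_0: "avg g N lam gam Q x0 x1 0 = Q (x1, \<lambda>k. x0)"
  by (simp add: avg_def SS_0)

lemma avg_nonneg: "(\<And>p. Q p \<ge> 0) \<Longrightarrow> avg g N lam gam Q x0 x1 n \<ge> 0"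
  unfolding avg_def by (intro mult_nonneg_nonneg sum_nonneg) auto

lemma avg_card: "N \<ge> 1 \<Longrightarrow> c * ((1 / real N ^ n) * real (card (SS N n))) = c"
  by (simp add: SS_card)

lemma avg_V_rec:
  fixes g :: "nat \<Rightarrow> 'a::euclidean_space \<Rightarrow> 'a"
  assumes N: "N \<ge> 1" and lam: "0 \<le> lam" "lam \<le> 1" and gam: "gam (Suc n) \<ge> 0"
    and xs: "(\<Sum>k=1..N. g k xs) = 0"
    and A3: "\<And>x. tau2 g N xs x \<le> L * (norm (x - xs))\<^sup>2"
    and A5: "\<And>x. (x - xs) \<bullet> ((1 / real N) *\<^sub>R (\<Sum>k=1..N. g k x)) \<ge> \<mu> * (norm (x - xs))\<^sup>2"
  shows "avg g N lam gam (\<lambda>p. (norm (fst p - xs))\<^sup>2) x0 x1 (Suc n)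
    \<le> (1 - 2 * \<mu> * gam (Suc n) + 3 * L * (gam (Suc n))\<^sup>2) * avg g N lam gam (\<lambda>p. (norm (fst p - xs))\<^sup>2) x0 x1 n
      + 3 * (gam (Suc n))\<^sup>2 * avg g N lam gam (\<lambda>p. saga_A g N xs (snd p)) x0 x1 n
      + 3 * (gam (Suc n))\<^sup>2 * ((1 / real N) * (\<Sum>k=1..N. (norm (g k xs))\<^sup>2))"
proof -
  let ?st = "\<lambda>v. saga_state g N lam gam x0 x1 v n"
  have "avg g N lam gam (\<lambda>p. (norm (fst p - xs))\<^sup>2) x0 x1 (Suc n) = (1 / real N ^ n) * (\<Sum>v\<in>SS N n.
     (1 / real N) * (\<Sum>j\<in>{1..N}. (norm (fst (stp g N lam gam n (?st v) j) - xs))\<^sup>2))"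
    by (rule avg_Suc[OF N])
  also have "\<dots> \<le> (1 - 2 * \<mu> * gam (Suc n) + 3 * L * (gam (Suc n))\<^sup>2) * ((1 / real N ^ n) * (\<Sum>v\<in>SS N n. (norm (fst (?st v) - xs))\<^sup>2))
      + 3 * (gam (Suc n))\<^sup>2 * ((1 / real N ^ n) * (\<Sum>v\<in>SS N n. saga_A g N xs (snd (?st v))))
      + (3 * (gam (Suc n))\<^sup>2 * ((1 / real N) * (\<Sum>k=1..N. (norm (g k xs))\<^sup>2))) * ((1 / real N ^ n) * real (card (SS N n)))"
  proof (rule avg_mono_lin)
    fix v
    show "(1 / real N) * (\<Sum>j\<in>{1..N}. (norm (fst (stp g N lam gam n (?st v) j) - xs))\<^sup>2)
      \<le> (1 - 2 * \<mu> * gam (Suc n) + 3 * L * (gam (Suc n))\<^sup>2) * (norm (fst (?st v) - xs))\<^sup>2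
       + 3 * (gam (Suc n))\<^sup>2 * saga_A g N xs (snd (?st v))
       + 3 * (gam (Suc n))\<^sup>2 * ((1 / real N) * (\<Sum>k=1..N. (norm (g k xs))\<^sup>2))"
      using step_V[OF N lam gam xs A3 A5, where x="fst (?st v)" and phi="snd (?st v)"] unfolding stp_def by simp
  qed
  also have "\<dots> = (1 - 2 * \<mu> * gam (Suc n) + 3 * L * (gam (Suc n))\<^sup>2) * avg g N lam gam (\<lambda>p. (norm (fst p - xs))\<^sup>2) x0 x1 n
      + 3 * (gam (Suc n))\<^sup>2 * avg g N lam gam (\<lambda>p. saga_A g N xs (snd p)) x0 x1 n
      + 3 * (gam (Suc n))\<^sup>2 * ((1 / real N) * (\<Sum>k=1..N. (norm (g k xs))\<^sup>2))"
    unfolding avg_def avg_card[OF N] ..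
  finally show ?thesis .
qed

lemma avg_A_rec:
  fixes g :: "nat \<Rightarrow> 'a::euclidean_space \<Rightarrow> 'a"
  assumes N: "N \<ge> 1" and A3: "\<And>x. tau2 g N xs x \<le> L * (norm (x - xs))\<^sup>2"
  shows "avg g N lam gam (\<lambda>p. saga_A g N xs (snd p)) x0 x1 (Suc n)
    \<le> (1 - 1 / real N) * avg g N lam gam (\<lambda>p. saga_A g N xs (snd p)) x0 x1 n
      + (L / real N) * avg g N lam gam (\<lambda>p. (norm (fst p - xs))\<^sup>2) x0 x1 n"
proof -
  let ?st = "\<lambda>v. saga_state g N lam gam x0 x1 v n"
  have "avg g N lam gam (\<lambda>p. saga_A g N xs (snd p)) x0 x1 (Suc n) = (1 / real N ^ n) * (\<Sum>v\<in>SS N n.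
     (1 / real N) * (\<Sum>j\<in>{1..N}. saga_A g N xs (snd (stp g N lam gam n (?st v) j))))"
    by (rule avg_Suc[OF N])
  also have "\<dots> \<le> (1 - 1 / real N) * ((1 / real N ^ n) * (\<Sum>v\<in>SS N n. saga_A g N xs (snd (?st v))))
      + (L / real N) * ((1 / real N ^ n) * (\<Sum>v\<in>SS N n. (norm (fst (?st v) - xs))\<^sup>2))
      + 0 * ((1 / real N ^ n) * real (card (SS N n)))"
  proof (rule avg_mono_lin)
    fix v
    have "(1 / real N) * (\<Sum>j\<in>{1..N}. saga_A g N xs (snd (stp g N lam gam n (?st v) j)))
       = (1 - 1 / real N) * saga_A g N xs (snd (?st v)) + (1 / real N) * tau2 g N xs (fst (?st v))"
      using step_A[OF N, where g=g and xs=xs and phi="snd (?st v)" and x="fst (?st v)"] unfolding stp_def by simp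
    moreover have "(1 / real N) * tau2 g N xs (fst (?st v)) \<le> (L / real N) * (norm (fst (?st v) - xs))\<^sup>2"
      using A3[of "fst (?st v)"] N by (simp add: divide_right_mono)
    ultimately show "(1 / real N) * (\<Sum>j\<in>{1..N}. saga_A g N xs (snd (stp g N lam gam n (?st v) j)))
      \<le> (1 - 1 / real N) * saga_A g N xs (snd (?st v)) + (L / real N) * (norm (fst (?st v) - xs))\<^sup>2 + 0"
      by simp
  qed
  also have "\<dots> = (1 - 1 / real N) * avg g N lam gam (\<lambda>p. saga_A g N xs (snd p)) x0 x1 n
      + (L / real N) * avg g N lam gam (\<lambda>p. (norm (fst p - xs))\<^sup>2) x0 x1 n"
    unfolding avg_def by simp
  finally show ?thesis .
qed

lemma avg_T_le:
  fixes g :: "nat \<Rightarrow> 'a::euclidean_space \<Rightarrow> 'a"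
  assumes A3: "\<And>x. tau2 g N xs x \<le> L * (norm (x - xs))\<^sup>2"
  shows "avg g N lam gam (\<lambda>p. tau2 g N xs (fst p)) x0 x1 n \<le> L * avg g N lam gam (\<lambda>p. (norm (fst p - xs))\<^sup>2) x0 x1 n"
proof -
  have "(\<Sum>v\<in>SS N n. tau2 g N xs (fst (saga_state g N lam gam x0 x1 v n))) \<le> (\<Sum>v\<in>SS N n. L * (norm (fst (saga_state g N lam gam x0 x1 v n) - xs))\<^sup>2)"
    by (rule sum_mono) (rule A3)
  also have "\<dots> = L * (\<Sum>v\<in>SS N n. (norm (fst (saga_state g N lam gam x0 x1 v n) - xs))\<^sup>2)"
    by (simp add: sum_distrib_left)
  finally have "(\<Sum>v\<in>SS N n. tau2 g N xs (fst (saga_state g N lam gam x0 x1 v n))) / real N ^ n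
      \<le> (L * (\<Sum>v\<in>SS N n. (norm (fst (saga_state g N lam gam x0 x1 v n) - xs))\<^sup>2)) / real N ^ n"
    by (rule divide_right_mono) simp
  then show ?thesis unfolding avg_def by simp
qed




lemma state_meas:
  fixes g :: "nat \<Rightarrow> 'a::euclidean_space \<Rightarrow> 'a" and K :: "'c measure"
  assumes gm: "\<And>k. k \<in> {1..N} \<Longrightarrow> g k \<in> borel_measurable borel"
    and v: "\<And>m. m \<in> {2..n+1} \<Longrightarrow> v m \<in> {1..N}"
    and ya: "ya \<in> borel_measurable K" and yb: "yb \<in> borel_measurable K"
  shows "(\<lambda>w. fst (saga_state g N lam gam (ya w) (yb w) v n)) \<in> borel_measurable K
       \<and> (\<forall>k. (\<lambda>w. snd (saga_state g N lam gam (ya w) (yb w) v n) k) \<in> borel_measurable K)"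
  using v
proof (induction n)
  case 0 then show ?case using ya yb by simp
next
  case (Suc n)
  have IH: "(\<lambda>w. fst (saga_state g N lam gam (ya w) (yb w) v n)) \<in> borel_measurable K"
    "\<And>k. (\<lambda>w. snd (saga_state g N lam gam (ya w) (yb w) v n) k) \<in> borel_measurable K"
    using Suc by auto
  define F where "F w = fst (saga_state g N lam gam (ya w) (yb w) v n)" for w
  define P where "P w = snd (saga_state g N lam gam (ya w) (yb w) v n)" for w
  have Fm: "F \<in> borel_measurable K" using IH(1) unfolding F_def .
  have Pm: "(\<lambda>w. P w k) \<in> borel_measurable K" for k using IH(2) unfolding P_def .
  define j where "j = v (n + 2)"
  have j: "j \<in> {1..N}" using Suc.prems[of "n+2"] unfolding j_def by auto
  have gjF: "(\<lambda>w. g j (F w)) \<in> borel_measurable K"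
    using measurable_compose[OF Fm gm[OF j]] by (simp add: o_def)
  have gP: "(\<lambda>w. g k (P w k)) \<in> borel_measurable K" if "k \<in> {1..N}" for k
    using measurable_compose[OF Pm gm[OF that]] by (simp add: o_def)
  have sm: "(\<lambda>w. \<Sum>k=1..N. g k (P w k)) \<in> borel_measurable K"
    by (rule borel_measurable_sum) (rule gP)
  have fst_eq: "(\<lambda>w. fst (saga_state g N lam gam (ya w) (yb w) v (Suc n)))
      = (\<lambda>w. F w - gam (n + 1) *\<^sub>R (g j (F w) - lam *\<^sub>R (g j (P w j) - (1 / real N) *\<^sub>R (\<Sum>k=1..N. g k (P w k)))))"
    by (simp only: saga_state_Suc') (simp add: stp_def F_def P_def j_def)
  have snd_eq: "(\<lambda>w. snd (saga_state g N lam gam (ya w) (yb w) v (Suc n)) k)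
      = (\<lambda>w. if k = j then F w else P w k)" for k
    by (simp only: saga_state_Suc') (auto simp: stp_def F_def P_def j_def fun_eq_iff)
  have "(\<lambda>w. F w - gam (n + 1) *\<^sub>R (g j (F w) - lam *\<^sub>R (g j (P w j) - (1 / real N) *\<^sub>R (\<Sum>k=1..N. g k (P w k))))) \<in> borel_measurable K"
    by (intro borel_measurable_diff borel_measurable_scaleR borel_measurable_const Fm gjF gP[OF j] sm)
  moreover have "(\<lambda>w. if k = j then F w else P w k) \<in> borel_measurable K" for k
    by (cases "k = j") (simp_all add: Fm Pm)
  ultimately show ?case unfolding fst_eq snd_eq by simp
qed

lemma fst_borel: "(fst :: 'a::euclidean_space \<times> 'a \<Rightarrow> 'a) \<in> borel_measurable borel"
  by (intro borel_measurable_continuous_onI continuous_intros)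

lemma snd_borel: "(snd :: 'a::euclidean_space \<times> 'a \<Rightarrow> 'a) \<in> borel_measurable borel"
  by (intro borel_measurable_continuous_onI continuous_intros)

lemma Q_meas:
  fixes g :: "nat \<Rightarrow> 'a::euclidean_space \<Rightarrow> 'a" and K :: "'c measure"
  assumes gm: "\<And>k. k \<in> {1..N} \<Longrightarrow> g k \<in> borel_measurable borel"
    and v: "\<And>m. m \<in> {2..n+1} \<Longrightarrow> v m \<in> {1..N}"
    and ya: "ya \<in> borel_measurable K" and yb: "yb \<in> borel_measurable K"
  shows "(\<lambda>w. (norm (fst (saga_state g N lam gam (ya w) (yb w) v n) - xs))\<^sup>2) \<in> borel_measurable K"
    and "(\<lambda>w. saga_A g N xs (snd (saga_state g N lam gam (ya w) (yb w) v n))) \<in> borel_measurable K"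
    and "(\<lambda>w. tau2 g N xs (fst (saga_state g N lam gam (ya w) (yb w) v n))) \<in> borel_measurable K"
proof -
  note S = state_meas[where g=g and N=N and v=v and n=n and ya=ya and yb=yb and K=K and lam=lam and gam=gam, OF gm v ya yb]
  have F: "(\<lambda>w. fst (saga_state g N lam gam (ya w) (yb w) v n)) \<in> borel_measurable K" using S by blast
  have P: "(\<lambda>w. snd (saga_state g N lam gam (ya w) (yb w) v n) k) \<in> borel_measurable K" for k using S by blast
  show "(\<lambda>w. (norm (fst (saga_state g N lam gam (ya w) (yb w) v n) - xs))\<^sup>2) \<in> borel_measurable K"
    by (intro borel_measurable_power measurable_compose[OF _ borel_measurable_norm] borel_measurable_diff F borel_measurable_const)
  have gP: "(\<lambda>w. g k (snd (saga_state g N lam gam (ya w) (yb w) v n) k)) \<in> borel_measurable K" if "k \<in> {1..N}" for k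
    using measurable_compose[OF P gm[OF that]] by (simp add: o_def)
  have gF: "(\<lambda>w. g k (fst (saga_state g N lam gam (ya w) (yb w) v n))) \<in> borel_measurable K" if "k \<in> {1..N}" for k
    using measurable_compose[OF F gm[OF that]] by (simp add: o_def)
  show "(\<lambda>w. saga_A g N xs (snd (saga_state g N lam gam (ya w) (yb w) v n))) \<in> borel_measurable K"
    unfolding saga_A_def
    by (intro borel_measurable_times borel_measurable_const borel_measurable_sum borel_measurable_power
        measurable_compose[OF _ borel_measurable_norm] borel_measurable_diff gP) auto
  show "(\<lambda>w. tau2 g N xs (fst (saga_state g N lam gam (ya w) (yb w) v n))) \<in> borel_measurable K"
    unfolding tau2_def
    by (intro borel_measurable_times borel_measurable_const borel_measurable_sum borel_measurable_power
        measurable_compose[OF _ borel_measurable_norm] borel_measurable_diff gF) auto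
qed




locale saga_prob = prob_space M for M :: "'b measure" +
  fixes g :: "nat \<Rightarrow> 'a::euclidean_space \<Rightarrow> 'a" and N :: nat
    and X0 X1 :: "'b \<Rightarrow> 'a" and U :: "nat \<Rightarrow> 'b \<Rightarrow> nat"
  assumes N: "N \<ge> 1"
    and gm: "\<And>k. k \<in> {1..N} \<Longrightarrow> g k \<in> borel_measurable borel"
    and X0m: "X0 \<in> borel_measurable M" and X1m: "X1 \<in> borel_measurable M"
    and U_meas: "\<And>n. n \<ge> 2 \<Longrightarrow> U n \<in> measurable M (count_space UNIV)"
    and U_unif: "\<And>n. n \<ge> 2 \<Longrightarrow>
        distr M (count_space UNIV) (U n) = measure_pmf (pmf_of_set {1..N})"
    and U_indep: "indep_vars (\<lambda>_. count_space UNIV) U {2..}"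
    and U_X_indep: "indep_set
        (sets (vimage_algebra (space M) (\<lambda>\<omega>. (X0 \<omega>, X1 \<omega>)) borel))
        (sets (vimage_algebra (space M) (\<lambda>\<omega>. \<lambda>n\<in>{2::nat..}. U n \<omega>)
                (PiM {2..} (\<lambda>_. count_space (UNIV::nat set)))))"
begin

definition Bv :: "nat \<Rightarrow> (nat \<Rightarrow> nat) \<Rightarrow> 'b set" where
  "Bv n v = {\<omega> \<in> space M. \<forall>m\<in>{2..n+1}. U m \<omega> = v m}"

lemma prob_U_single:
  assumes m: "m \<ge> 2" and j: "j \<in> {1..N}"
  shows "prob (U m -` {j} \<inter> space M) = 1 / real N"
proof -
  have "prob (U m -` {j} \<inter> space M) = measure (distr M (count_space UNIV) (U m)) {j}"
    by (rule measure_distr[OF U_meas[OF m], symmetric]) simp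
  also have "\<dots> = pmf (pmf_of_set {1..N}) j"
    unfolding U_unif[OF m] measure_pmf_single ..
  also have "\<dots> = 1 / real N" using j N by simp
  finally show ?thesis .
qed

lemma prob_Bv:
  assumes v: "v \<in> SS N n"
  shows "prob (Bv n v) = 1 / real N ^ n"
proof (cases "n = 0")
  case True
  then have "Bv n v = space M" unfolding Bv_def by auto
  then show ?thesis using True prob_space by simp
next
  case False
  have eq: "Bv n v = (\<Inter>m\<in>{2..n+1}. U m -` {v m} \<inter> space M)"
    unfolding Bv_def using False by auto
  have "prob (\<Inter>m\<in>{2..n+1}. U m -` {v m} \<inter> space M) = (\<Prod>m\<in>{2..n+1}. prob (U m -` {v m} \<inter> space M))"
    by (rule indep_varsD[OF U_indep]) (use False in auto)
  also have "\<dots> = (\<Prod>m\<in>{2..n+1}. 1 / real N)"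
    by (intro prod.cong refl prob_U_single) (use v in \<open>auto simp: SS_def\<close>)
  also have "\<dots> = 1 / real N ^ n" by (simp add: power_one_over)
  finally show ?thesis using eq by simp
qed

lemma AE_U: "AE \<omega> in M. \<forall>m. m \<ge> 2 \<longrightarrow> U m \<omega> \<in> {1..N}"
proof (subst AE_all_countable, intro allI)
  fix m :: nat
  show "AE \<omega> in M. m \<ge> 2 \<longrightarrow> U m \<omega> \<in> {1..N}"
  proof (cases "m \<ge> 2")
    case True
    have "AE x in distr M (count_space UNIV) (U m). x \<in> {1..N}"
      unfolding U_unif[OF True] AE_measure_pmf_iff using N by simp
    then have "AE \<omega> in M. U m \<omega> \<in> {1..N}" by (rule AE_distrD[OF U_meas[OF True]])
    then show ?thesis by simp
  qed simp
qed

lemma decomp: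
  fixes Q :: "'a \<times> (nat \<Rightarrow> 'a) \<Rightarrow> real"
  assumes w: "\<omega> \<in> space M" "\<forall>m. m \<ge> 2 \<longrightarrow> U m \<omega> \<in> {1..N}"
  shows "Q (saga_state g N lam gam x0 x1 (\<lambda>m. U m \<omega>) n)
     = (\<Sum>v\<in>SS N n. indicator (Bv n v) \<omega> * Q (saga_state g N lam gam x0 x1 v n))"
proof -
  define v0 where "v0 = restrict (\<lambda>m. U m \<omega>) {2..n+1}"
  have v0S: "v0 \<in> SS N n" unfolding v0_def SS_def using w(2) by auto
  have ind: "indicator (Bv n v) \<omega> = (if v = v0 then 1 else (0::real))" if "v \<in> SS N n" for v
  proof -
    have "(\<forall>m\<in>{2..n+1}. U m \<omega> = v m) \<longleftrightarrow> v = v0"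
      using that unfolding v0_def SS_def by (auto simp: fun_eq_iff PiE_iff extensional_def)
    then show ?thesis using w(1) unfolding Bv_def by (auto simp: indicator_def)
  qed
  have "(\<Sum>v\<in>SS N n. indicator (Bv n v) \<omega> * Q (saga_state g N lam gam x0 x1 v n))
      = (\<Sum>v\<in>SS N n. (if v = v0 then Q (saga_state g N lam gam x0 x1 v n) else 0))"
    by (intro sum.cong refl) (simp add: ind v0S)
  also have "\<dots> = Q (saga_state g N lam gam x0 x1 v0 n)"
    using v0S SS_finite by simp
  also have "saga_state g N lam gam x0 x1 v0 n = saga_state g N lam gam x0 x1 (\<lambda>m. U m \<omega>) n"
    by (rule saga_state_cong) (simp add: v0_def)
  finally show ?thesis by simp
qed

abbreviation SA where "SA \<equiv> sets (vimage_algebra (space M) (\<lambda>\<omega>. (X0 \<omega>, X1 \<omega>)) borel)"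
abbreviation SB where "SB \<equiv> sets (vimage_algebra (space M) (\<lambda>\<omega>. \<lambda>n\<in>{2::nat..}. U n \<omega>)
                (PiM {2..} (\<lambda>_. count_space (UNIV::nat set))))"

lemma Bv_SB: "Bv n v \<in> SB"
proof -
  let ?P = "PiM {2::nat..} (\<lambda>_. count_space (UNIV::nat set))"
  let ?F = "\<lambda>\<omega>. \<lambda>n\<in>{2::nat..}. U n \<omega>"
  have F: "?F \<in> space M \<rightarrow> space ?P" by (auto simp: space_PiM)
  define C where "C = {f \<in> space ?P. \<forall>m\<in>{2..n+1}. f m = v m}"
  have C: "C \<in> sets ?P"
  proof (cases "n = 0")
    case True
    then have "C = space ?P" unfolding C_def by auto
    then show ?thesis by simp
  next
    case False
    have "C = (\<Inter>m\<in>{2..n+1}. (\<lambda>f. f m) -` {v m} \<inter> space ?P)"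
      unfolding C_def using False by auto
    also have "\<dots> \<in> sets ?P"
    proof (rule sets.finite_INT)
      fix m assume "m \<in> {2..n+1}"
      then have "(\<lambda>f. f m) \<in> measurable ?P (count_space UNIV)"
        using measurable_component_singleton[of m "{2::nat..}" "\<lambda>_. count_space UNIV"] by auto
      then show "(\<lambda>f. f m) -` {v m} \<inter> space ?P \<in> sets ?P" by (rule measurable_sets) simp
    qed (use False in auto)
    finally show ?thesis .
  qed
  have "Bv n v = ?F -` C \<inter> space M"
    unfolding Bv_def C_def by (auto simp: space_PiM)
  then show ?thesis unfolding sets_vimage_algebra2[OF F] using C by blast
qed

end



context saga_prob
begin

lemma Ym: "(\<lambda>\<omega>. (X0 \<omega>, X1 \<omega>)) \<in> borel_measurable M"
  using X0m X1m by (rule borel_measurable_Pair)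

lemma SA_sa: "sigma_algebra (space M) SA"
  using sets.sigma_algebra_axioms[of "vimage_algebra (space M) (\<lambda>\<omega>. (X0 \<omega>, X1 \<omega>)) borel"] by simp

lemma SB_sa: "sigma_algebra (space M) SB"
  using sets.sigma_algebra_axioms[of "vimage_algebra (space M) (\<lambda>\<omega>. \<lambda>n\<in>{2::nat..}. U n \<omega>) (PiM {2..} (\<lambda>_. count_space (UNIV::nat set)))"] by simp

lemma SB_events: "SB \<subseteq> events"
  using U_X_indep unfolding indep_sets2_eq by blast

lemma indep_factor:
  fixes h :: "'a \<times> 'a \<Rightarrow> real"
  assumes h: "h \<in> borel_measurable borel" and B: "B \<in> SB"
  shows "(\<integral>\<^sup>+ \<omega>. ennreal (h (X0 \<omega>, X1 \<omega>)) * indicator B \<omega> \<partial>M) = ennreal (prob B) * (\<integral>\<^sup>+ \<omega>. ennreal (h (X0 \<omega>, X1 \<omega>)) \<partial>M)"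
proof -
  define Y where "Y \<omega> = (X0 \<omega>, X1 \<omega>)" for \<omega>
  have Ym': "Y \<in> borel_measurable M" using Ym unfolding Y_def .
  define Z1 :: "'b \<Rightarrow> ennreal" where "Z1 \<omega> = ennreal (h (Y \<omega>))" for \<omega>
  define Z2 :: "'b \<Rightarrow> ennreal" where "Z2 \<omega> = indicator B \<omega>" for \<omega>
  have Bev: "B \<in> events" using B SB_events by blast
  have Bsp: "B \<subseteq> space M" using Bev sets.sets_into_space by blast
  have hm: "(\<lambda>p. ennreal (h p)) \<in> borel_measurable borel" using h by measurable
  have Z1m: "Z1 \<in> borel_measurable M" unfolding Z1_def
    using measurable_compose[OF Ym' hm] by (simp add: o_def)
  have Z2m: "Z2 \<in> borel_measurable M" unfolding Z2_def using Bev by simp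
  have Yf: "Y \<in> space M \<rightarrow> space borel" by simp
  have G1: "{Z1 -` A \<inter> space M | A. A \<in> sets borel} \<subseteq> SA"
  proof
    fix S assume "S \<in> {Z1 -` A \<inter> space M | A. A \<in> sets borel}"
    then obtain A where A: "A \<in> sets borel" and S: "S = Z1 -` A \<inter> space M" by blast
    have "S = Y -` ((\<lambda>p. ennreal (h p)) -` A \<inter> space borel) \<inter> space M"
      unfolding S Z1_def by auto
    moreover have "(\<lambda>p. ennreal (h p)) -` A \<inter> space borel \<in> sets borel"
      using measurable_sets[OF hm A] .
    ultimately show "S \<in> SA" unfolding Y_def[abs_def] sets_vimage_algebra2[OF Yf[unfolded Y_def[abs_def]]] by blast
  qed
  have G2: "{Z2 -` A \<inter> space M | A. A \<in> sets borel} \<subseteq> SB"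
  proof
    fix S assume "S \<in> {Z2 -` A \<inter> space M | A. A \<in> sets borel}"
    then obtain A where S: "S = Z2 -` A \<inter> space M" by blast
    have Seq: "S = (if 1 \<in> A then B else {}) \<union> (if 0 \<in> A then space M - B else {})"
      unfolding S Z2_def using Bsp by (auto split: split_indicator split_indicator_asm)
    define V where "V = vimage_algebra (space M) (\<lambda>\<omega>. \<lambda>n\<in>{2::nat..}. U n \<omega>) (PiM {2..} (\<lambda>_. count_space (UNIV::nat set)))"
    have sV: "space V = space M" unfolding V_def by simp
    have BV: "B \<in> sets V" using B unfolding V_def .
    have c: "space V - B \<in> sets V" using BV by (rule sets.compl_sets)
    have e: "{} \<in> sets V" by (rule sets.empty_sets)
    have "(if 1 \<in> A then B else {}) \<union> (if 0 \<in> A then space V - B else {}) \<in> sets V"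
      by (rule sets.Un) (use BV c e in auto)
    then show "S \<in> SB" unfolding Seq V_def[symmetric] sV by simp
  qed
  have S1: "sigma_sets (space M) {Z1 -` A \<inter> space M | A. A \<in> sets borel} \<subseteq> SA"
    by (rule sigma_algebra.sigma_sets_subset[OF SA_sa G1])
  have S2: "sigma_sets (space M) {Z2 -` A \<inter> space M | A. A \<in> sets borel} \<subseteq> SB"
    by (rule sigma_algebra.sigma_sets_subset[OF SB_sa G2])
  have "indep_set (sigma_sets (space M) {Z1 -` A \<inter> space M | A. A \<in> sets borel})
                  (sigma_sets (space M) {Z2 -` A \<inter> space M | A. A \<in> sets borel})"
    using U_X_indep S1 S2 unfolding indep_sets2_eq by blast
  then have iv: "indep_var borel Z1 borel Z2"
    unfolding indep_var_eq using Z1m Z2m by simp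
  have cb: "case_bool (borel :: ennreal measure) borel = (\<lambda>_. borel)"
    by (rule ext) (simp split: bool.split)
  have ivs: "indep_vars (\<lambda>_. borel) (case_bool Z1 Z2) UNIV"
    using iv unfolding indep_var_def cb .
  have "(\<integral>\<^sup>+\<omega>. (\<Prod>i\<in>UNIV. case_bool Z1 Z2 i \<omega>) \<partial>M) = (\<Prod>i\<in>UNIV. \<integral>\<^sup>+\<omega>. case_bool Z1 Z2 i \<omega> \<partial>M)"
    by (rule indep_vars_nn_integral) (use ivs in auto)
  then have "(\<integral>\<^sup>+\<omega>. Z1 \<omega> * Z2 \<omega> \<partial>M) = (\<integral>\<^sup>+\<omega>. Z1 \<omega> \<partial>M) * (\<integral>\<^sup>+\<omega>. Z2 \<omega> \<partial>M)"
    by (simp add: UNIV_bool mult.commute)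
  moreover have "(\<integral>\<^sup>+\<omega>. Z2 \<omega> \<partial>M) = ennreal (prob B)"
    unfolding Z2_def using Bev by (simp add: emeasure_eq_measure)
  ultimately show ?thesis unfolding Z1_def Z2_def Y_def by (simp add: mult.commute)
qed

lemma link:
  fixes Q :: "'a \<times> (nat \<Rightarrow> 'a) \<Rightarrow> real"
  assumes Qnn: "\<And>p. Q p \<ge> 0"
    and Qm: "\<And>v. v \<in> SS N n \<Longrightarrow> (\<lambda>p::'a\<times>'a. Q (saga_state g N lam gam (fst p) (snd p) v n)) \<in> borel_measurable borel"
  shows "AE \<omega> in M. Q (saga_state g N lam gam (X0 \<omega>) (X1 \<omega>) (\<lambda>m. U m \<omega>) n)
            = (\<Sum>v\<in>SS N n. indicator (Bv n v) \<omega> * Q (saga_state g N lam gam (X0 \<omega>) (X1 \<omega>) v n))"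
    and "(\<lambda>\<omega>. \<Sum>v\<in>SS N n. indicator (Bv n v) \<omega> * Q (saga_state g N lam gam (X0 \<omega>) (X1 \<omega>) v n)) \<in> borel_measurable M"
    and "(\<integral>\<^sup>+ \<omega>. ennreal (\<Sum>v\<in>SS N n. indicator (Bv n v) \<omega> * Q (saga_state g N lam gam (X0 \<omega>) (X1 \<omega>) v n)) \<partial>M)
       = (\<integral>\<^sup>+ \<omega>. ennreal (avg g N lam gam Q (X0 \<omega>) (X1 \<omega>) n) \<partial>M)"
proof -
  show "AE \<omega> in M. Q (saga_state g N lam gam (X0 \<omega>) (X1 \<omega>) (\<lambda>m. U m \<omega>) n)
            = (\<Sum>v\<in>SS N n. indicator (Bv n v) \<omega> * Q (saga_state g N lam gam (X0 \<omega>) (X1 \<omega>) v n))"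
    using AE_U AE_space by eventually_elim (rule decomp[where Q=Q], auto)
  have Qv: "(\<lambda>\<omega>. Q (saga_state g N lam gam (X0 \<omega>) (X1 \<omega>) v n)) \<in> borel_measurable M" if "v \<in> SS N n" for v
    using measurable_compose[OF Ym Qm[OF that]] by (simp add: o_def)
  have Bev: "Bv n v \<in> events" for v using Bv_SB SB_events by blast
  show "(\<lambda>\<omega>. \<Sum>v\<in>SS N n. indicator (Bv n v) \<omega> * Q (saga_state g N lam gam (X0 \<omega>) (X1 \<omega>) v n)) \<in> borel_measurable M"
    by (intro borel_measurable_sum borel_measurable_times Qv) (use Bev in simp_all)
  have "(\<integral>\<^sup>+ \<omega>. ennreal (\<Sum>v\<in>SS N n. indicator (Bv n v) \<omega> * Q (saga_state g N lam gam (X0 \<omega>) (X1 \<omega>) v n)) \<partial>M)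
      = (\<integral>\<^sup>+ \<omega>. (\<Sum>v\<in>SS N n. ennreal (Q (saga_state g N lam gam (X0 \<omega>) (X1 \<omega>) v n)) * indicator (Bv n v) \<omega>) \<partial>M)"
  proof (intro nn_integral_cong)
    fix \<omega>
    have "ennreal (\<Sum>v\<in>SS N n. indicator (Bv n v) \<omega> * Q (saga_state g N lam gam (X0 \<omega>) (X1 \<omega>) v n))
        = (\<Sum>v\<in>SS N n. ennreal (indicator (Bv n v) \<omega> * Q (saga_state g N lam gam (X0 \<omega>) (X1 \<omega>) v n)))"
      by (rule sum_ennreal[symmetric]) (simp add: Qnn)
    also have "\<dots> = (\<Sum>v\<in>SS N n. ennreal (Q (saga_state g N lam gam (X0 \<omega>) (X1 \<omega>) v n)) * indicator (Bv n v) \<omega>)"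
      by (intro sum.cong refl) (simp split: split_indicator)
    finally show "ennreal (\<Sum>v\<in>SS N n. indicator (Bv n v) \<omega> * Q (saga_state g N lam gam (X0 \<omega>) (X1 \<omega>) v n))
        = (\<Sum>v\<in>SS N n. ennreal (Q (saga_state g N lam gam (X0 \<omega>) (X1 \<omega>) v n)) * indicator (Bv n v) \<omega>)" .
  qed
  also have "\<dots> = (\<Sum>v\<in>SS N n. \<integral>\<^sup>+ \<omega>. ennreal (Q (saga_state g N lam gam (X0 \<omega>) (X1 \<omega>) v n)) * indicator (Bv n v) \<omega> \<partial>M)"
    by (rule nn_integral_sum) (use Qv Bev in simp)
  also have "\<dots> = (\<Sum>v\<in>SS N n. ennreal (1 / real N ^ n) * (\<integral>\<^sup>+ \<omega>. ennreal (Q (saga_state g N lam gam (X0 \<omega>) (X1 \<omega>) v n)) \<partial>M))"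
  proof (intro sum.cong refl)
    fix v assume v: "v \<in> SS N n"
    have "(\<integral>\<^sup>+ \<omega>. ennreal (Q (saga_state g N lam gam (X0 \<omega>) (X1 \<omega>) v n)) * indicator (Bv n v) \<omega> \<partial>M)
        = ennreal (prob (Bv n v)) * (\<integral>\<^sup>+ \<omega>. ennreal (Q (saga_state g N lam gam (X0 \<omega>) (X1 \<omega>) v n)) \<partial>M)"
      using indep_factor[OF Qm[OF v] Bv_SB] by simp
    then show "(\<integral>\<^sup>+ \<omega>. ennreal (Q (saga_state g N lam gam (X0 \<omega>) (X1 \<omega>) v n)) * indicator (Bv n v) \<omega> \<partial>M)
        = ennreal (1 / real N ^ n) * (\<integral>\<^sup>+ \<omega>. ennreal (Q (saga_state g N lam gam (X0 \<omega>) (X1 \<omega>) v n)) \<partial>M)"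
      using prob_Bv[OF v] by simp
  qed
  also have "\<dots> = (\<Sum>v\<in>SS N n. \<integral>\<^sup>+ \<omega>. ennreal (1 / real N ^ n) * ennreal (Q (saga_state g N lam gam (X0 \<omega>) (X1 \<omega>) v n)) \<partial>M)"
    by (intro sum.cong refl nn_integral_cmult[symmetric]) (use Qv in simp)
  also have "\<dots> = (\<integral>\<^sup>+ \<omega>. (\<Sum>v\<in>SS N n. ennreal (1 / real N ^ n) * ennreal (Q (saga_state g N lam gam (X0 \<omega>) (X1 \<omega>) v n))) \<partial>M)"
    by (rule nn_integral_sum[symmetric]) (use Qv in simp)
  also have "\<dots> = (\<integral>\<^sup>+ \<omega>. ennreal (avg g N lam gam Q (X0 \<omega>) (X1 \<omega>) n) \<partial>M)"
  proof (intro nn_integral_cong)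
    fix \<omega>
    have "(\<Sum>v\<in>SS N n. ennreal (1 / real N ^ n) * ennreal (Q (saga_state g N lam gam (X0 \<omega>) (X1 \<omega>) v n)))
       = (\<Sum>v\<in>SS N n. ennreal (1 / real N ^ n * Q (saga_state g N lam gam (X0 \<omega>) (X1 \<omega>) v n)))"
      by (intro sum.cong refl) (rule ennreal_mult[symmetric]; simp add: Qnn)
    also have "\<dots> = ennreal (\<Sum>v\<in>SS N n. 1 / real N ^ n * Q (saga_state g N lam gam (X0 \<omega>) (X1 \<omega>) v n))"
      by (rule sum_ennreal) (simp add: Qnn)
    also have "\<dots> = ennreal (avg g N lam gam Q (X0 \<omega>) (X1 \<omega>) n)"
      unfolding avg_def by (simp add: sum_distrib_left)
    finally show "(\<Sum>v\<in>SS N n. ennreal (1 / real N ^ n) * ennreal (Q (saga_state g N lam gam (X0 \<omega>) (X1 \<omega>) v n)))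
       = ennreal (avg g N lam gam Q (X0 \<omega>) (X1 \<omega>) n)" .
  qed
  finally show "(\<integral>\<^sup>+ \<omega>. ennreal (\<Sum>v\<in>SS N n. indicator (Bv n v) \<omega> * Q (saga_state g N lam gam (X0 \<omega>) (X1 \<omega>) v n)) \<partial>M)
       = (\<integral>\<^sup>+ \<omega>. ennreal (avg g N lam gam Q (X0 \<omega>) (X1 \<omega>) n) \<partial>M)" .
qed

end



context saga_prob
begin

lemma final_Q:
  fixes Q :: "'a \<times> (nat \<Rightarrow> 'a) \<Rightarrow> real" and gam :: "nat \<Rightarrow> real" and lam K :: real
    and Cb :: "'a \<Rightarrow> 'a \<Rightarrow> real"
  assumes Qnn: "\<And>p. Q p \<ge> 0"
    and Qm: "\<And>n v. v \<in> SS N n \<Longrightarrow> (\<lambda>p::'a\<times>'a. Q (saga_state g N lam gam (fst p) (snd p) v n)) \<in> borel_measurable borel"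
    and gpos: "\<And>n. gam (Suc n) \<ge> 0"
    and bound: "\<And>x0 x1 m. (\<Sum>n<m. gam (Suc n) * avg g N lam gam Q x0 x1 n) \<le> K * Cb x0 x1"
    and Kpos: "K \<ge> 0" and Cbnn: "\<And>a b. Cb a b \<ge> 0"
    and Cbint: "(\<integral>\<^sup>+ \<omega>. ennreal (Cb (X0 \<omega>) (X1 \<omega>)) \<partial>M) < \<infinity>"
    and Cbm: "(\<lambda>\<omega>. Cb (X0 \<omega>) (X1 \<omega>)) \<in> borel_measurable M"
  shows "AE \<omega> in M. summable (\<lambda>n. gam (Suc n) * Q (saga_state g N lam gam (X0 \<omega>) (X1 \<omega>) (\<lambda>m. U m \<omega>) n))"
    and "(\<Sum>n. ennreal (gam (Suc n)) * (\<integral>\<^sup>+ \<omega>. ennreal (Q (saga_state g N lam gam (X0 \<omega>) (X1 \<omega>) (\<lambda>m. U m \<omega>) n)) \<partial>M)) < \<infinity>"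
proof -
  define Qn where "Qn n \<omega> = Q (saga_state g N lam gam (X0 \<omega>) (X1 \<omega>) (\<lambda>m. U m \<omega>) n)" for n \<omega>
  define Rn where "Rn n \<omega> = (\<Sum>v\<in>SS N n. indicator (Bv n v) \<omega> * Q (saga_state g N lam gam (X0 \<omega>) (X1 \<omega>) v n))" for n \<omega>
  define An where "An n \<omega> = avg g N lam gam Q (X0 \<omega>) (X1 \<omega>) n" for n \<omega>
  have AEn: "AE \<omega> in M. Qn n \<omega> = Rn n \<omega>" for n
    unfolding Qn_def Rn_def by (rule link(1)[OF Qnn Qm])
  have Rm: "Rn n \<in> borel_measurable M" for n
    unfolding Rn_def[abs_def] by (rule link(2)[OF Qnn Qm])
  have RA: "(\<integral>\<^sup>+ \<omega>. ennreal (Rn n \<omega>) \<partial>M) = (\<integral>\<^sup>+ \<omega>. ennreal (An n \<omega>) \<partial>M)" for n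
    unfolding Rn_def An_def by (rule link(3)[OF Qnn Qm])
  have Rnn: "Rn n \<omega> \<ge> 0" for n \<omega> unfolding Rn_def by (intro sum_nonneg mult_nonneg_nonneg) (auto simp: Qnn)
  have Ann: "An n \<omega> \<ge> 0" for n \<omega> unfolding An_def by (rule avg_nonneg[OF Qnn])
  have Am: "An n \<in> borel_measurable M" for n
  proof -
    have "(\<lambda>\<omega>. Q (saga_state g N lam gam (X0 \<omega>) (X1 \<omega>) v n)) \<in> borel_measurable M" if "v \<in> SS N n" for v
      using measurable_compose[OF Ym Qm[OF that]] by (simp add: o_def)
    then show ?thesis unfolding An_def[abs_def] avg_def
      by (intro borel_measurable_times borel_measurable_const borel_measurable_sum) auto
  qed
  have T: "(\<Sum>n. ennreal (gam (Suc n)) * (\<integral>\<^sup>+ \<omega>. ennreal (An n \<omega>) \<partial>M)) < \<infinity>"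
  proof -
    have "(\<Sum>n. ennreal (gam (Suc n)) * (\<integral>\<^sup>+ \<omega>. ennreal (An n \<omega>) \<partial>M))
        = (\<Sum>n. \<integral>\<^sup>+ \<omega>. ennreal (gam (Suc n) * An n \<omega>) \<partial>M)"
    proof (intro suminf_cong)
      fix n
      have "ennreal (gam (Suc n)) * (\<integral>\<^sup>+ \<omega>. ennreal (An n \<omega>) \<partial>M) = (\<integral>\<^sup>+ \<omega>. ennreal (gam (Suc n)) * ennreal (An n \<omega>) \<partial>M)"
        by (rule nn_integral_cmult[symmetric]) (use Am in simp)
      also have "\<dots> = (\<integral>\<^sup>+ \<omega>. ennreal (gam (Suc n) * An n \<omega>) \<partial>M)"
        by (intro nn_integral_cong) (simp add: ennreal_mult gpos Ann)
      finally show "ennreal (gam (Suc n)) * (\<integral>\<^sup>+ \<omega>. ennreal (An n \<omega>) \<partial>M) = (\<integral>\<^sup>+ \<omega>. ennreal (gam (Suc n) * An n \<omega>) \<partial>M)" .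
    qed
    also have "\<dots> = (\<integral>\<^sup>+ \<omega>. (\<Sum>n. ennreal (gam (Suc n) * An n \<omega>)) \<partial>M)"
      by (rule nn_integral_suminf[symmetric]) (use Am in simp)
    also have "\<dots> \<le> (\<integral>\<^sup>+ \<omega>. ennreal K * ennreal (Cb (X0 \<omega>) (X1 \<omega>)) \<partial>M)"
    proof (rule nn_integral_mono)
      fix \<omega>
      have nn: "\<And>n. 0 \<le> gam (Suc n) * An n \<omega>" using gpos Ann by simp
      have b: "\<And>m. (\<Sum>n<m. gam (Suc n) * An n \<omega>) \<le> K * Cb (X0 \<omega>) (X1 \<omega>)"
        unfolding An_def by (rule bound)
      have s: "summable (\<lambda>n. gam (Suc n) * An n \<omega>)" by (rule summableI_nonneg_bounded[OF nn b])
      have "(\<Sum>n. ennreal (gam (Suc n) * An n \<omega>)) = ennreal (\<Sum>n. gam (Suc n) * An n \<omega>)"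
        by (rule suminf_ennreal2[OF nn s])
      also have "\<dots> \<le> ennreal (K * Cb (X0 \<omega>) (X1 \<omega>))"
        by (intro ennreal_leI suminf_le_const[OF s b])
      also have "\<dots> \<le> ennreal K * ennreal (Cb (X0 \<omega>) (X1 \<omega>))"
        by (simp add: ennreal_mult Kpos Cbnn)
      finally show "(\<Sum>n. ennreal (gam (Suc n) * An n \<omega>)) \<le> ennreal K * ennreal (Cb (X0 \<omega>) (X1 \<omega>))" .
    qed
    also have "\<dots> = ennreal K * (\<integral>\<^sup>+ \<omega>. ennreal (Cb (X0 \<omega>) (X1 \<omega>)) \<partial>M)"
      by (rule nn_integral_cmult) (use Cbm in simp)
    also have "\<dots> < \<infinity>" using Cbint by (simp add: ennreal_mult_less_top)
    finally show ?thesis .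
  qed
  have QR: "(\<integral>\<^sup>+ \<omega>. ennreal (Qn n \<omega>) \<partial>M) = (\<integral>\<^sup>+ \<omega>. ennreal (An n \<omega>) \<partial>M)" for n
  proof -
    have "(\<integral>\<^sup>+ \<omega>. ennreal (Qn n \<omega>) \<partial>M) = (\<integral>\<^sup>+ \<omega>. ennreal (Rn n \<omega>) \<partial>M)"
      by (rule nn_integral_cong_AE) (use AEn[of n] in \<open>auto elim: eventually_mono\<close>)
    then show ?thesis using RA by simp
  qed
  show "(\<Sum>n. ennreal (gam (Suc n)) * (\<integral>\<^sup>+ \<omega>. ennreal (Q (saga_state g N lam gam (X0 \<omega>) (X1 \<omega>) (\<lambda>m. U m \<omega>) n)) \<partial>M)) < \<infinity>"
    using T QR unfolding Qn_def by simp
  have IR: "(\<integral>\<^sup>+ \<omega>. (\<Sum>n. ennreal (gam (Suc n) * Rn n \<omega>)) \<partial>M) = (\<Sum>n. ennreal (gam (Suc n)) * (\<integral>\<^sup>+ \<omega>. ennreal (An n \<omega>) \<partial>M))"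
  proof -
    have "(\<integral>\<^sup>+ \<omega>. (\<Sum>n. ennreal (gam (Suc n) * Rn n \<omega>)) \<partial>M) = (\<Sum>n. \<integral>\<^sup>+ \<omega>. ennreal (gam (Suc n) * Rn n \<omega>) \<partial>M)"
      by (rule nn_integral_suminf) (use Rm in simp)
    also have "\<dots> = (\<Sum>n. ennreal (gam (Suc n)) * (\<integral>\<^sup>+ \<omega>. ennreal (An n \<omega>) \<partial>M))"
    proof (intro suminf_cong)
      fix n
      have "(\<integral>\<^sup>+ \<omega>. ennreal (gam (Suc n) * Rn n \<omega>) \<partial>M) = (\<integral>\<^sup>+ \<omega>. ennreal (gam (Suc n)) * ennreal (Rn n \<omega>) \<partial>M)"
        by (intro nn_integral_cong) (simp add: ennreal_mult gpos Rnn)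
      also have "\<dots> = ennreal (gam (Suc n)) * (\<integral>\<^sup>+ \<omega>. ennreal (Rn n \<omega>) \<partial>M)"
        by (rule nn_integral_cmult) (use Rm in simp)
      finally show "(\<integral>\<^sup>+ \<omega>. ennreal (gam (Suc n) * Rn n \<omega>) \<partial>M) = ennreal (gam (Suc n)) * (\<integral>\<^sup>+ \<omega>. ennreal (An n \<omega>) \<partial>M)"
        using RA by simp
    qed
    finally show ?thesis .
  qed
  have AEfin: "AE \<omega> in M. (\<Sum>n. ennreal (gam (Suc n) * Rn n \<omega>)) \<noteq> \<infinity>"
  proof (rule nn_integral_PInf_AE)
    show "(\<lambda>\<omega>. \<Sum>n. ennreal (gam (Suc n) * Rn n \<omega>)) \<in> borel_measurable M" using Rm by simp
    show "(\<integral>\<^sup>+ \<omega>. (\<Sum>n. ennreal (gam (Suc n) * Rn n \<omega>)) \<partial>M) \<noteq> \<infinity>" using IR T by simp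
  qed
  have AEall: "AE \<omega> in M. \<forall>n. Qn n \<omega> = Rn n \<omega>"
    using AEn by (simp add: AE_all_countable)
  show "AE \<omega> in M. summable (\<lambda>n. gam (Suc n) * Q (saga_state g N lam gam (X0 \<omega>) (X1 \<omega>) (\<lambda>m. U m \<omega>) n))"
    using AEfin AEall
  proof eventually_elim
    case (elim \<omega>)
    have "summable (\<lambda>n. gam (Suc n) * Rn n \<omega>)"
      by (rule summable_suminf_not_top) (use elim gpos Rnn in \<open>auto simp: top_unique\<close>)
    then show ?case using elim(2) unfolding Qn_def by simp
  qed
qed

end



theorem theorem5:
  fixes M :: "'b measure"
    and f :: "nat \<Rightarrow> 'a::euclidean_space \<Rightarrow> real"
    and g :: "nat \<Rightarrow> 'a \<Rightarrow> 'a"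
    and N :: nat and lam :: real and gam :: "nat \<Rightarrow> real"
    and X0 X1 :: "'b \<Rightarrow> 'a" and U :: "nat \<Rightarrow> 'b \<Rightarrow> nat" and xs :: 'a
  assumes P: "prob_space M"
    and N: "N \<ge> 1"
    and lam: "0 \<le> lam" "lam \<le> 1"
    and grad: "\<And>k x. k \<in> {1..N} \<Longrightarrow> (f k has_derivative (\<lambda>h. g k x \<bullet> h)) (at x)"
    and gam_pos: "\<And>n. n \<ge> 1 \<Longrightarrow> gam n > 0"
    and gam_dec: "\<And>n. n \<ge> 1 \<Longrightarrow> gam (Suc n) \<le> gam n"
    and gam_lim: "gam \<longlonglongrightarrow> 0"
    and gam_div: "\<not> summable (\<lambda>n. gam (Suc n))"
    and gam_sq: "summable (\<lambda>n. (gam (Suc n))\<^sup>2)"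
    and X0: "X0 \<in> borel_measurable M" "integrable M (\<lambda>\<omega>. (norm (X0 \<omega>))\<^sup>2)"
    and X1: "X1 \<in> borel_measurable M" "integrable M (\<lambda>\<omega>. (norm (X1 \<omega>))\<^sup>2)"
    and U_meas: "\<And>n. n \<ge> 2 \<Longrightarrow> U n \<in> measurable M (count_space UNIV)"
    and U_unif: "\<And>n. n \<ge> 2 \<Longrightarrow>
        distr M (count_space UNIV) (U n) = measure_pmf (pmf_of_set {1..N})"
    and U_indep: "prob_space.indep_vars M (\<lambda>_. count_space UNIV) U {2..}"
    and U_X_indep: "prob_space.indep_set M
        (sets (vimage_algebra (space M) (\<lambda>\<omega>. (X0 \<omega>, X1 \<omega>)) borel))
        (sets (vimage_algebra (space M) (\<lambda>\<omega>. \<lambda>n\<in>{2::nat..}. U n \<omega>)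
                (PiM {2..} (\<lambda>_. count_space (UNIV::nat set)))))"
    and A1_cont: "continuous_on UNIV (\<lambda>x. (1 / real N) *\<^sub>R (\<Sum>k=1..N. g k x))"
    and A1_xs: "(1 / real N) *\<^sub>R (\<Sum>k=1..N. g k xs) = 0"
    and A1_uniq: "\<And>y. (1 / real N) *\<^sub>R (\<Sum>k=1..N. g k y) = 0 \<Longrightarrow> y = xs"
    and A3: "\<exists>L>0. \<forall>x. tau2 g N xs x \<le> L * (norm (x - xs))\<^sup>2"
    and A5: "\<exists>\<mu>>0. \<forall>x. (x - xs) \<bullet> ((1 / real N) *\<^sub>R (\<Sum>k=1..N. g k x)) \<ge> \<mu> * (norm (x - xs))\<^sup>2"
  shows "AE \<omega> in M.
      summable (\<lambda>n. gam (Suc n) * (norm (saga_X g N lam gam (X0 \<omega>) (X1 \<omega>) (\<lambda>m. U m \<omega>) (Suc n) - xs))\<^sup>2)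
    \<and> summable (\<lambda>n. gam (Suc n) * saga_A g N xs (saga_phi g N lam gam (X0 \<omega>) (X1 \<omega>) (\<lambda>m. U m \<omega>) (Suc n)))
    \<and> summable (\<lambda>n. gam (Suc n) * tau2 g N xs (saga_X g N lam gam (X0 \<omega>) (X1 \<omega>) (\<lambda>m. U m \<omega>) (Suc n)))
    \<and> (\<Sum>n. ennreal (gam (Suc n)) * (\<integral>\<^sup>+ \<omega>. ennreal ((norm (saga_X g N lam gam (X0 \<omega>) (X1 \<omega>) (\<lambda>m. U m \<omega>) (Suc n) - xs))\<^sup>2) \<partial>M)) < \<infinity>
    \<and> (\<Sum>n. ennreal (gam (Suc n)) * (\<integral>\<^sup>+ \<omega>. ennreal (saga_A g N xs (saga_phi g N lam gam (X0 \<omega>) (X1 \<omega>) (\<lambda>m. U m \<omega>) (Suc n))) \<partial>M)) < \<infinity>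
    \<and> (\<Sum>n. ennreal (gam (Suc n)) * (\<integral>\<^sup>+ \<omega>. ennreal (tau2 g N xs (saga_X g N lam gam (X0 \<omega>) (X1 \<omega>) (\<lambda>m. U m \<omega>) (Suc n))) \<partial>M)) < \<infinity>"
proof -
  interpret P: prob_space M by (rule P)
  obtain L where L: "L > 0" "\<And>x. tau2 g N xs x \<le> L * (norm (x - xs))\<^sup>2" using A3 by blast
  obtain \<mu> where mu: "\<mu> > 0" "\<And>x. (x - xs) \<bullet> ((1 / real N) *\<^sub>R (\<Sum>k=1..N. g k x)) \<ge> \<mu> * (norm (x - xs))\<^sup>2"
    using A5 by blast
  have gm: "g k \<in> borel_measurable borel" if "k \<in> {1..N}" for k
    by (rule deriv_meas[where F="f k"]) (rule grad[OF that])
  have "saga_prob M g N X0 X1 U"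
    unfolding saga_prob_def saga_prob_axioms_def
    using P N gm X0(1) X1(1) U_meas U_unif U_indep U_X_indep by auto
  then interpret S: saga_prob M g N X0 X1 U .
  have Npos: "real N > 0" using N by simp
  have xs0: "(\<Sum>k=1..N. g k xs) = 0" using A1_xs Npos by simp
  define \<sigma> where "\<sigma> = (1 / real N) * (\<Sum>k=1..N. (norm (g k xs))\<^sup>2)"
  have sig: "\<sigma> \<ge> 0" unfolding \<sigma>_def by (intro mult_nonneg_nonneg sum_nonneg) auto
  have gpos: "\<And>n. gam (Suc n) \<ge> 0" using gam_pos by (simp add: less_imp_le)
  have gdec': "\<And>n. gam (Suc (Suc n)) \<le> gam (Suc n)" using gam_dec by simp
  have glim': "(\<lambda>n. gam (Suc n)) \<longlonglongrightarrow> 0" using LIMSEQ_Suc[OF gam_lim] .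
  obtain K where K: "\<forall>e a. (\<forall>n. e n \<ge> 0 \<and> a n \<ge> 0)
     \<longrightarrow> (\<forall>n. e (Suc n) \<le> (1 - 2 * \<mu> * gam (Suc n) + 3 * L * (gam (Suc n))\<^sup>2) * e n + 3 * (gam (Suc n))\<^sup>2 * a n + 3 * (gam (Suc n))\<^sup>2 * \<sigma>)
     \<longrightarrow> (\<forall>n. a (Suc n) \<le> (1 - 1 / real N) * a n + (L / real N) * e n)
     \<longrightarrow> (\<forall>M. (\<Sum>n<M. gam (Suc n) * e n) \<le> K * (e 0 + a 0 + 1) \<and> (\<Sum>n<M. gam (Suc n) * a n) \<le> K * (e 0 + a 0 + 1))"
    using det_rec[of "\<lambda>n. gam (Suc n)" \<mu> L N \<sigma>, OF gpos gdec' glim' gam_sq mu(1) L(1) N sig] by blast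
  define Vq :: "'a \<times> (nat \<Rightarrow> 'a) \<Rightarrow> real" where "Vq = (\<lambda>p. (norm (fst p - xs))\<^sup>2)"
  define Aq :: "'a \<times> (nat \<Rightarrow> 'a) \<Rightarrow> real" where "Aq = (\<lambda>p. saga_A g N xs (snd p))"
  define Tq :: "'a \<times> (nat \<Rightarrow> 'a) \<Rightarrow> real" where "Tq = (\<lambda>p. tau2 g N xs (fst p))"
  define C0 :: "'a \<Rightarrow> 'a \<Rightarrow> real" where "C0 x0 x1 = (norm (x1 - xs))\<^sup>2 + saga_A g N xs (\<lambda>k. x0) + 1" for x0 x1
  have Ann: "saga_A g N xs phi \<ge> 0" for phi unfolding saga_A_def by (intro mult_nonneg_nonneg sum_nonneg) auto
  have Tnn: "tau2 g N xs x \<ge> 0" for x unfolding tau2_def by (intro mult_nonneg_nonneg sum_nonneg) auto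
  have C0pos: "C0 a b \<ge> 1" for a b unfolding C0_def using Ann by simp
  have bnd: "(\<Sum>n<m. gam (Suc n) * avg g N lam gam Vq x0 x1 n) \<le> K * C0 x0 x1
      \<and> (\<Sum>n<m. gam (Suc n) * avg g N lam gam Aq x0 x1 n) \<le> K * C0 x0 x1" for x0 x1 m
  proof -
    have h1: "\<forall>n. avg g N lam gam Vq x0 x1 n \<ge> 0 \<and> avg g N lam gam Aq x0 x1 n \<ge> 0"
      using avg_nonneg[of Vq] avg_nonneg[of Aq] Ann unfolding Vq_def Aq_def by auto
    have h2: "\<forall>n. avg g N lam gam Vq x0 x1 (Suc n) \<le> (1 - 2 * \<mu> * gam (Suc n) + 3 * L * (gam (Suc n))\<^sup>2) * avg g N lam gam Vq x0 x1 n
        + 3 * (gam (Suc n))\<^sup>2 * avg g N lam gam Aq x0 x1 n + 3 * (gam (Suc n))\<^sup>2 * \<sigma>"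
      using avg_V_rec[where g=g and N=N and lam=lam and gam=gam and xs=xs and L=L and \<mu>=\<mu>, OF N lam gpos xs0 L(2) mu(2)] unfolding Vq_def Aq_def \<sigma>_def by blast
    have h3: "\<forall>n. avg g N lam gam Aq x0 x1 (Suc n) \<le> (1 - 1 / real N) * avg g N lam gam Aq x0 x1 n + (L / real N) * avg g N lam gam Vq x0 x1 n"
      using avg_A_rec[where g=g and N=N and lam=lam and gam=gam and xs=xs and L=L, OF N L(2)] unfolding Vq_def Aq_def by blast
    have "avg g N lam gam Vq x0 x1 0 + avg g N lam gam Aq x0 x1 0 + 1 = C0 x0 x1"
      unfolding avg_0 Vq_def Aq_def C0_def by simp
    moreover have "\<forall>M. (\<Sum>n<M. gam (Suc n) * avg g N lam gam Vq x0 x1 n) \<le> K * (avg g N lam gam Vq x0 x1 0 + avg g N lam gam Aq x0 x1 0 + 1)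
        \<and> (\<Sum>n<M. gam (Suc n) * avg g N lam gam Aq x0 x1 n) \<le> K * (avg g N lam gam Vq x0 x1 0 + avg g N lam gam Aq x0 x1 0 + 1)"
      using K[THEN spec[where x="\<lambda>n. avg g N lam gam Vq x0 x1 n"], THEN spec[where x="\<lambda>n. avg g N lam gam Aq x0 x1 n"]] h1 h2 h3
      by blast
    ultimately show ?thesis by simp
  qed
  have Kpos: "K \<ge> 0"
  proof -
    have "0 \<le> K * C0 xs xs" using bnd[of xs xs 0] by simp
    then show ?thesis using C0pos[of xs xs] by (simp add: zero_le_mult_iff)
  qed
  have bndT: "(\<Sum>n<m. gam (Suc n) * avg g N lam gam Tq x0 x1 n) \<le> (L * K) * C0 x0 x1" for x0 x1 m
  proof -
    have "(\<Sum>n<m. gam (Suc n) * avg g N lam gam Tq x0 x1 n) \<le> (\<Sum>n<m. L * (gam (Suc n) * avg g N lam gam Vq x0 x1 n))"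
    proof (rule sum_mono)
      fix n
      have "avg g N lam gam Tq x0 x1 n \<le> L * avg g N lam gam Vq x0 x1 n"
        unfolding Tq_def Vq_def by (rule avg_T_le[OF L(2)])
      then show "gam (Suc n) * avg g N lam gam Tq x0 x1 n \<le> L * (gam (Suc n) * avg g N lam gam Vq x0 x1 n)"
        using mult_left_mono[OF _ gpos[of n]] by (metis mult.left_commute)
    qed
    also have "\<dots> = L * (\<Sum>n<m. gam (Suc n) * avg g N lam gam Vq x0 x1 n)" by (simp add: sum_distrib_left)
    also have "\<dots> \<le> L * (K * C0 x0 x1)" using bnd[of x0 x1 m] L(1) by (simp add: mult_left_mono)
    finally show ?thesis by (simp add: mult.assoc)
  qed
  have sqd: "(norm (a - b))\<^sup>2 \<le> 2 * (norm a)\<^sup>2 + 2 * (norm b)\<^sup>2" for a b :: 'a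
  proof -
    have "norm (a - b) \<le> norm a + norm b" by (rule norm_triangle_ineq4)
    then have "(norm (a - b))\<^sup>2 \<le> (norm a + norm b)\<^sup>2" by (simp add: power_mono)
    also have "\<dots> \<le> 2 * (norm a)\<^sup>2 + 2 * (norm b)\<^sup>2"
    proof -
      have h1: "(norm a + norm b)\<^sup>2 = (norm a)\<^sup>2 + (norm b)\<^sup>2 + 2 * norm a * norm b" by (simp add: power2_sum)
      have h2: "(norm a - norm b)\<^sup>2 = (norm a)\<^sup>2 + (norm b)\<^sup>2 - 2 * norm a * norm b" by (simp add: power2_diff)
      have h3: "0 \<le> (norm a - norm b)\<^sup>2" by simp
      from h1 h2 h3 show ?thesis by linarith
    qed
    finally show ?thesis .
  qed
  define D where "D \<omega> = 2 * (norm (X1 \<omega>))\<^sup>2 + 2 * (norm xs)\<^sup>2 + L * (2 * (norm (X0 \<omega>))\<^sup>2) + (L * (2 * (norm xs)\<^sup>2) + 1)" for \<omega>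
  have CD: "C0 (X0 \<omega>) (X1 \<omega>) \<le> D \<omega>" for \<omega>
  proof -
    have "saga_A g N xs (\<lambda>k. X0 \<omega>) = tau2 g N xs (X0 \<omega>)" unfolding saga_A_def tau2_def ..
    also have "\<dots> \<le> L * (norm (X0 \<omega> - xs))\<^sup>2" by (rule L(2))
    also have "\<dots> \<le> L * (2 * (norm (X0 \<omega>))\<^sup>2 + 2 * (norm xs)\<^sup>2)" using sqd L(1) by (simp add: mult_left_mono)
    finally have "saga_A g N xs (\<lambda>k. X0 \<omega>) \<le> L * (2 * (norm (X0 \<omega>))\<^sup>2 + 2 * (norm xs)\<^sup>2)" .
    then show ?thesis unfolding C0_def D_def using sqd[of "X1 \<omega>" xs] by (simp add: algebra_simps)
  qed
  have Dint: "integrable M D"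
    unfolding D_def
    using X0(2) X1(2) by simp
  have C0m: "(\<lambda>\<omega>. C0 (X0 \<omega>) (X1 \<omega>)) \<in> borel_measurable M"
  proof -
    have "(\<lambda>\<omega>. g k (X0 \<omega>)) \<in> borel_measurable M" if "k \<in> {1..N}" for k
      using measurable_compose[OF X0(1) gm[OF that]] by (simp add: o_def)
    then show ?thesis unfolding C0_def saga_A_def
      by (intro borel_measurable_add borel_measurable_times borel_measurable_const borel_measurable_sum
          borel_measurable_power measurable_compose[OF _ borel_measurable_norm] borel_measurable_diff X1(1)) auto
  qed
  have C0int: "(\<integral>\<^sup>+ \<omega>. ennreal (C0 (X0 \<omega>) (X1 \<omega>)) \<partial>M) < \<infinity>"
  proof -
    have "(\<integral>\<^sup>+ \<omega>. ennreal (C0 (X0 \<omega>) (X1 \<omega>)) \<partial>M) \<le> (\<integral>\<^sup>+ \<omega>. ennreal (D \<omega>) \<partial>M)"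
      by (intro nn_integral_mono ennreal_leI CD)
    also have "\<dots> < \<infinity>" using integrableD(2)[OF Dint] by (simp add: less_top)
    finally show ?thesis .
  qed
  have C0nn: "\<And>a b. C0 a b \<ge> 0" using C0pos by (meson order.trans zero_le_one)
  have vS: "\<And>m. m \<in> {2..n+1} \<Longrightarrow> v m \<in> {1..N}" if "v \<in> SS N n" for v n
    using that unfolding SS_def by auto
  have Vm: "(\<lambda>p::'a\<times>'a. Vq (saga_state g N lam gam (fst p) (snd p) v n)) \<in> borel_measurable borel" if "v \<in> SS N n" for n v
    unfolding Vq_def by (rule Q_meas(1)[OF gm vS[OF that] fst_borel snd_borel])
  have Am: "(\<lambda>p::'a\<times>'a. Aq (saga_state g N lam gam (fst p) (snd p) v n)) \<in> borel_measurable borel" if "v \<in> SS N n" for n v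
    unfolding Aq_def by (rule Q_meas(2)[OF gm vS[OF that] fst_borel snd_borel])
  have Tm: "(\<lambda>p::'a\<times>'a. Tq (saga_state g N lam gam (fst p) (snd p) v n)) \<in> borel_measurable borel" if "v \<in> SS N n" for n v
    unfolding Tq_def by (rule Q_meas(3)[OF gm vS[OF that] fst_borel snd_borel])
  have Vnn: "\<And>p. Vq p \<ge> 0" unfolding Vq_def by simp
  have Anq: "\<And>p. Aq p \<ge> 0" unfolding Aq_def using Ann by simp
  have Tnq: "\<And>p. Tq p \<ge> 0" unfolding Tq_def using Tnn by simp
  have LK: "L * K \<ge> 0" using L(1) Kpos by simp
  have FV1: "AE \<omega> in M. summable (\<lambda>n. gam (Suc n) * Vq (saga_state g N lam gam (X0 \<omega>) (X1 \<omega>) (\<lambda>m. U m \<omega>) n))"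
    by (rule S.final_Q(1)[where K="K" and Cb=C0]) (use Vnn Vm gpos conjunct1[OF bnd] Kpos C0nn C0int C0m in auto)
  have FV2: "(\<Sum>n. ennreal (gam (Suc n)) * (\<integral>\<^sup>+ \<omega>. ennreal (Vq (saga_state g N lam gam (X0 \<omega>) (X1 \<omega>) (\<lambda>m. U m \<omega>) n)) \<partial>M)) < \<infinity>"
    by (rule S.final_Q(2)[where K="K" and Cb=C0]) (use Vnn Vm gpos conjunct1[OF bnd] Kpos C0nn C0int C0m in auto)
  have FA1: "AE \<omega> in M. summable (\<lambda>n. gam (Suc n) * Aq (saga_state g N lam gam (X0 \<omega>) (X1 \<omega>) (\<lambda>m. U m \<omega>) n))"
    by (rule S.final_Q(1)[where K="K" and Cb=C0]) (use Anq Am gpos conjunct2[OF bnd] Kpos C0nn C0int C0m in auto)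
  have FA2: "(\<Sum>n. ennreal (gam (Suc n)) * (\<integral>\<^sup>+ \<omega>. ennreal (Aq (saga_state g N lam gam (X0 \<omega>) (X1 \<omega>) (\<lambda>m. U m \<omega>) n)) \<partial>M)) < \<infinity>"
    by (rule S.final_Q(2)[where K="K" and Cb=C0]) (use Anq Am gpos conjunct2[OF bnd] Kpos C0nn C0int C0m in auto)
  have FT1: "AE \<omega> in M. summable (\<lambda>n. gam (Suc n) * Tq (saga_state g N lam gam (X0 \<omega>) (X1 \<omega>) (\<lambda>m. U m \<omega>) n))"
    by (rule S.final_Q(1)[where K="L * K" and Cb=C0]) (use Tnq Tm gpos bndT LK C0nn C0int C0m in auto)
  have FT2: "(\<Sum>n. ennreal (gam (Suc n)) * (\<integral>\<^sup>+ \<omega>. ennreal (Tq (saga_state g N lam gam (X0 \<omega>) (X1 \<omega>) (\<lambda>m. U m \<omega>) n)) \<partial>M)) < \<infinity>"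
    by (rule S.final_Q(2)[where K="L * K" and Cb=C0]) (use Tnq Tm gpos bndT LK C0nn C0int C0m in auto)
  have eX: "saga_X g N lam gam a b u (Suc n) = fst (saga_state g N lam gam a b u n)" for a b u n
    unfolding saga_X_def by simp
  have eP: "saga_phi g N lam gam a b u (Suc n) = snd (saga_state g N lam gam a b u n)" for a b u n
    unfolding saga_phi_def by simp
  show ?thesis
    unfolding eX eP
    using FV1 FA1 FT1 FV2 FA2 FT2 unfolding Vq_def Aq_def Tq_def
    by (auto elim!: eventually_mono[OF eventually_conj[OF eventually_conj]])
qed



end
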